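(* Let $n\ge 2$ and run Protocol 1 on $n$ nodes, one of which is initially in state $L_0$ and the remaining $n-1$ in state $F$. Then Protocol 1 stably constructs the graph language $\mathscr{T}=\{G : G \text{ is a tree rooted at the leader and every node } u \text{ has } \Delta^+(u)\le 2\}$, where $\Delta^+(u)$ is the number of children of $u$; moreover, under the uniform random scheduler, the execution stabilises to a spanning tree in $\mathscr{T}$ within $O(\log n)$ parallel time with high probability.
   Context: Network constructor model: there are $n$ nodes and every pair of nodes may interact. Each node has a state from a finite set $Q$; each of the $n(n-1)/2$ node pairs carries an edge state in $\{0,1\}$ (inactive/active), all initially $0$. At each discrete step the uniform random scheduler picks an unordered pair $\{u,v\}$ uniformly at random among all $n(n-1)/2$ pairs, independently of the past, and the two nodes and their edge are updated by the transition function $\delta:(a,b,c)\mapsto(a',b',c')$ (applicable with either ordering of the pair); any triple not listed as a rule is left unchanged. All states are output states, so the output graph of a configuration is the graph on all nodes whose edges are the active edges. An execution stabilises to a graph $G$ if from some step on the output graph is always (isomorphic to) $G$; the running time is the first such step, and parallel time is the number of steps divided by $n$. A protocol stably constructs a graph language $\mathscr{G}$ if every fair execution stabilises to a graph in $\mathscr{G}$ and every graph $G\in\mathscr{G}$ is the stabilised output of some execution on $|V(G)|$ nodes (an infinite execution is fair if whenever a configuration $C$ occurs infinitely often, every configuration reachable from $C$ in one step occurs infinitely often). "With high probability" means with probability at least $1-n^{-a}$ for an arbitrarily chosen constant $a>0$ (the time bound's constant depending on $a$). Protocol 1 (2-Slot protocol): $Q=\{F,L_0,L_1,L_2,O_0,O_1,O_2\}$,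 rules $(L_0,F,0)\to(L_1,O_0,1)$, $(L_1,F,0)\to(L_2,O_0,1)$, $(O_0,F,0)\to(O_1,O_0,1)$, $(O_1,F,0)\to(O_2,O_0,1)$. When such a rule fires, the node that moves from $F$ to $O_0$ becomes a child of the other node; the leader (initially $L_0$) is the root. *)

theory Defs
  imports "HOL-Probability.Probability"
begin

datatype st = F | L0 | L1 | L2 | O0 | O1 | O2

fun delta :: "st \<Rightarrow> st \<Rightarrow> bool \<Rightarrow> (st \<times> st \<times> bool) option" where
  "delta L0 F False = Some (L1, O0, True)"
| "delta L1 F False = Some (L2, O0, True)"
| "delta O0 F False = Some (O1, O0, True)"
| "delta O1 F False = Some (O2, O0, True)"
| "delta _ _ _ = None"

text \<open>Configuration: node states and the set of active edges (unordered pairs {u,v}).\<close>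
type_synonym config = "(nat \<Rightarrow> st) \<times> nat set set"

definition apply_rule :: "nat \<Rightarrow> nat \<Rightarrow> st \<times> st \<times> bool \<Rightarrow> config \<Rightarrow> config" where
  "apply_rule u v r c = (case r of (a, b, e) \<Rightarrow>
     ((fst c)(u := a, v := b), if e then insert {u, v} (snd c) else snd c - {{u, v}}))"

definition interact :: "nat \<Rightarrow> nat \<Rightarrow> config \<Rightarrow> config" where
  "interact u v c =
     (case delta (fst c u) (fst c v) ({u, v} \<in> snd c) of
        Some r \<Rightarrow> apply_rule u v r c
      | None \<Rightarrow> (case delta (fst c v) (fst c u) ({u, v} \<in> snd c) of
                   Some r \<Rightarrow> apply_rule v u r c
                 | None \<Rightarrow> c))"

definition init :: "nat \<Rightarrow> config" where
  "init l = ((\<lambda>i. if i = l then L0 else F), {})"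

definition step :: "nat \<Rightarrow> config \<Rightarrow> config \<Rightarrow> bool" where
  "step n c c' \<longleftrightarrow> (\<exists>u v. u < n \<and> v < n \<and> u \<noteq> v \<and> c' = interact u v c)"

definition execution :: "nat \<Rightarrow> nat \<Rightarrow> (nat \<Rightarrow> config) \<Rightarrow> bool" where
  "execution n l C \<longleftrightarrow> C 0 = init l \<and> (\<forall>t. step n (C t) (C (Suc t)))"

definition fair :: "nat \<Rightarrow> (nat \<Rightarrow> config) \<Rightarrow> bool" where
  "fair n C \<longleftrightarrow> (\<forall>c. infinite {t. C t = c} \<longrightarrow>
                    (\<forall>c'. step n c c' \<longrightarrow> infinite {t. C t = c'}))"

definition pairs :: "nat \<Rightarrow> nat set set" where
  "pairs n = {{u, v} | u v. u < n \<and> v < n \<and> u \<noteq> v}"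

definition adj :: "nat set set \<Rightarrow> nat \<Rightarrow> nat \<Rightarrow> bool" where
  "adj G u v \<longleftrightarrow> u \<noteq> v \<and> {u, v} \<in> G"

definition iso :: "nat \<Rightarrow> nat set set \<Rightarrow> nat set set \<Rightarrow> bool" where
  "iso n G H \<longleftrightarrow> (\<exists>f. bij_betw f {0..<n} {0..<n} \<and>
       (\<forall>u<n. \<forall>v<n. adj G u v \<longleftrightarrow> adj H (f u) (f v)))"

definition connected_graph :: "nat \<Rightarrow> nat set set \<Rightarrow> bool" where
  "connected_graph n G \<longleftrightarrow>
     (\<forall>u<n. \<forall>v<n. (\<lambda>a b. a < n \<and> b < n \<and> adj G a b)\<^sup>*\<^sup>* u v)"

definition has_cycle :: "nat \<Rightarrow> nat set set \<Rightarrow> bool" where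
  "has_cycle n G \<longleftrightarrow> (\<exists>cs. 3 \<le> length cs \<and> distinct cs \<and> set cs \<subseteq> {0..<n} \<and>
       (\<forall>i < length cs. adj G (cs ! i) (cs ! ((i + 1) mod length cs))))"

definition is_tree :: "nat \<Rightarrow> nat set set \<Rightarrow> bool" where
  "is_tree n G \<longleftrightarrow> G \<subseteq> pairs n \<and> connected_graph n G \<and> \<not> has_cycle n G"

text \<open>In a tree rooted at r, v is a child of u iff u,v are adjacent, v is not the root,
  and u is reachable from r without passing through v (i.e. u lies on the r-v path).\<close>
definition child :: "nat \<Rightarrow> nat set set \<Rightarrow> nat \<Rightarrow> nat \<Rightarrow> nat \<Rightarrow> bool" where
  "child n G r u v \<longleftrightarrow> adj G u v \<and> v \<noteq> r \<and>
     (\<lambda>a b. a < n \<and> b < n \<and> a \<noteq> v \<and> b \<noteq> v \<and> adj G a b)\<^sup>*\<^sup>* r u"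

definition treeT :: "nat \<Rightarrow> nat set set \<Rightarrow> bool" where
  "treeT n G \<longleftrightarrow> is_tree n G \<and>
     (\<exists>r<n. \<forall>u<n. card {v. v < n \<and> child n G r u v} \<le> 2)"

definition stabilises :: "nat \<Rightarrow> (nat \<Rightarrow> config) \<Rightarrow> nat set set \<Rightarrow> bool" where
  "stabilises n C G \<longleftrightarrow> (\<exists>t0. \<forall>t\<ge>t0. iso n (snd (C t)) G)"

definition stably_constructs :: "nat \<Rightarrow> nat \<Rightarrow> (nat set set \<Rightarrow> bool) \<Rightarrow> bool" where
  "stably_constructs n l L \<longleftrightarrow>
     (\<forall>C. execution n l C \<and> fair n C \<longrightarrow> (\<exists>G. L G \<and> stabilises n C G)) \<and>
     (\<forall>G. L G \<longrightarrow> (\<exists>C. execution n l C \<and> stabilises n C G))"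

definition upairs :: "nat \<Rightarrow> (nat \<times> nat) set" where
  "upairs n = {(u, v). u < v \<and> v < n}"

definition sched :: "nat \<Rightarrow> (nat \<times> nat) stream measure" where
  "sched n = stream_space (measure_pmf (pmf_of_set (upairs n)))"

definition config_at :: "nat \<Rightarrow> (nat \<times> nat) stream \<Rightarrow> nat \<Rightarrow> config" where
  "config_at l \<omega> t = fold (\<lambda>(u, v) c. interact u v c) (stake t \<omega>) (init l)"

end

theory Submission
  imports Defs
begin

fun slots :: "st \<Rightarrow> nat" where
  "slots F = 0" | "slots L0 = 2" | "slots L1 = 1" | "slots L2 = 0"
| "slots O0 = 2" | "slots O1 = 1" | "slots O2 = 0"

fun used :: "st \<Rightarrow> nat" where
  "used F = 0" | "used L0 = 0" | "used L1 = 1" | "used L2 = 2"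
| "used O0 = 0" | "used O1 = 1" | "used O2 = 2"

fun nxt :: "st \<Rightarrow> st" where
  "nxt L0 = L1" | "nxt L1 = L2" | "nxt O0 = O1" | "nxt O1 = O2" | "nxt s = s"

definition attach :: "nat \<Rightarrow> nat \<Rightarrow> config \<Rightarrow> config" where
  "attach p x c = ((fst c)(p := nxt (fst c p), x := O0), insert {p, x} (snd c))"

lemma interact_attach:
  assumes "fst c x = F" "0 < slots (fst c p)" "{p,x} \<notin> snd c"
  shows "interact p x c = attach p x c" "interact x p c = attach p x c"
  using assms
  by (cases "fst c p"; auto simp: interact_def apply_rule_def attach_def insert_commute)+

lemma interact_noop:
  assumes "\<not> (fst c v = F \<and> 0 < slots (fst c u) \<and> {u,v} \<notin> snd c)"
    "\<not> (fst c u = F \<and> 0 < slots (fst c v) \<and> {u,v} \<notin> snd c)"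
  shows "interact u v c = c"
  using assms
  by (cases "fst c u"; cases "fst c v"; auto simp: interact_def apply_rule_def)

lemma interact_cases:
  "interact u v c = c \<or> (\<exists>p x. (p = u \<and> x = v \<or> p = v \<and> x = u) \<and> fst c x = F \<and>
      0 < slots (fst c p) \<and> {p,x} \<notin> snd c \<and> interact u v c = attach p x c)"
proof (cases "fst c v = F \<and> 0 < slots (fst c u) \<and> {u,v} \<notin> snd c")
  case True
  then show ?thesis using interact_attach(1)[of c v u] by blast
next
  case f1: False
  show ?thesis
  proof (cases "fst c u = F \<and> 0 < slots (fst c v) \<and> {u,v} \<notin> snd c")
    case True
    then show ?thesis using interact_attach(2)[of c u v] by (metis insert_commute)
  next
    case False
    then show ?thesis using interact_noop f1 by blast
  qed
qed

lemma rtp_mono: "r\<^sup>*\<^sup>* a b \<Longrightarrow> (\<And>x y. r x y \<Longrightarrow> s x y) \<Longrightarrow> s\<^sup>*\<^sup>* a b"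
  by (induction rule: rtranclp_induct) (auto intro: rtranclp.rtrancl_into_rtrancl)

lemma mod_arith1:
  assumes "i < (m::nat)" "3 \<le> m" "(i+1) mod m = (i + m - 1) mod m" shows False
proof (cases "i + 1 < m")
  case True
  then have a: "(i+1) mod m = i + 1" by simp
  show False
  proof (cases "i = 0")
    case True
    have e: "i + m - 1 = m - 1" using True by simp
    have "(i + m - 1) mod m = m - 1" unfolding e using assms by simp
    then show False using assms a True by simp
  next
    case False
    have e: "i + m - 1 = (i - 1) + m" using False by simp
    have "(i + m - 1) mod m = i - 1" unfolding e mod_add_self2 using assms by simp
    then show False using a assms False by simp
  qed
next
  case False
  then have i: "i = m - 1" using assms by simp
  then have "(i+1) mod m = 0" using assms by simp
  moreover have e: "i + m - 1 = (m - 2) + m" using i assms by simp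
  have "(i + m - 1) mod m = m - 2" unfolding e mod_add_self2 using assms by simp
  ultimately show False using assms by simp
qed
lemma mod_arith2:
  assumes "i < (m::nat)" "3 \<le> m" shows "((i + m - 1) mod m + 1) mod m = i"
  using assms by (metis le_add2 le_add_diff_inverse2 le_trans mod_add_left_eq
    mod_add_self2 mod_if one_le_numeral)

lemma adj_insert: "adj (insert {p,x} E) a b \<longleftrightarrow> adj E a b \<or> (a \<noteq> b \<and> (a = p \<and> b = x \<or> a = x \<and> b = p))"
  by (auto simp: adj_def doubleton_eq_iff)

lemma no_cycle_leaf:
  assumes nc: "\<not> has_cycle n E" and isol: "\<forall>e\<in>E. x \<notin> e" and px: "p \<noteq> x"
  shows "\<not> has_cycle n (insert {p,x} E)"
proof
  assume "has_cycle n (insert {p,x} E)"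
  then obtain cs where L: "3 \<le> length cs" "distinct cs" "set cs \<subseteq> {0..<n}"
    and A: "\<forall>i<length cs. adj (insert {p,x} E) (cs!i) (cs!((i+1) mod length cs))"
    unfolding has_cycle_def by blast
  have nE: "\<not> adj E x y" "\<not> adj E y x" for y using isol by (auto simp: adj_def)
  show False
  proof (cases "x \<in> set cs")
    case False
    have "\<forall>i<length cs. adj E (cs!i) (cs!((i+1) mod length cs))"
    proof (intro allI impI)
      fix i assume i: "i < length cs"
      have "0 < length cs" using L by linarith
      then have m: "(i+1) mod length cs < length cs" by simp
      have "cs!i \<in> set cs" "cs!((i+1) mod length cs) \<in> set cs" using i m by simp_all
      then have "cs!i \<noteq> x" "cs!((i+1) mod length cs) \<noteq> x" using False by auto
      moreover have "adj (insert {p,x} E) (cs!i) (cs!((i+1) mod length cs))" using A i by blast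
      ultimately show "adj E (cs!i) (cs!((i+1) mod length cs))" by (simp add: adj_insert)
    qed
    then show False using nc L unfolding has_cycle_def by blast
  next
    case True
    then obtain i where i: "i < length cs" "cs!i = x" by (auto simp: in_set_conv_nth)
    define m where "m = length cs"
    define j where "j = (i+1) mod m"
    define j' where "j' = (i + m - 1) mod m"
    have m3: "3 \<le> m" using L m_def by simp
    have jm: "j < m" "j' < m" using m3 by (simp_all add: j_def j'_def)
    have jj: "(j'+1) mod m = i" using mod_arith2[of i m] i m3 by (simp add: j'_def m_def)
    have "adj (insert {p,x} E) (cs!i) (cs!((i+1) mod length cs))" using A i(1) by blast
    then have a1: "adj (insert {p,x} E) x (cs!j)" using i(2) by (simp add: j_def m_def)
    have "adj (insert {p,x} E) (cs!j') (cs!((j'+1) mod length cs))" using A jm m_def by blast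
    then have a2: "adj (insert {p,x} E) (cs!j') x" using jj i(2) m_def by simp
    have "cs!j = p" using a1 nE(1)[of "cs!j"] px by (simp add: adj_insert)
    moreover have "cs!j' = p" using a2 nE(2)[of "cs!j'"] px by (simp add: adj_insert)
    ultimately have "cs!j = cs!j'" by simp
    then have "j = j'" using L(2) jm m_def by (simp add: nth_eq_iff_index_eq)
    then show False using mod_arith1[of i m] i m3 by (simp add: j_def j'_def m_def)
  qed
qed

lemma leaf_rtranclp:
  assumes S': "\<And>a b. S' a b \<Longrightarrow> S a b \<or> (a=p \<and> b=x) \<or> (a=x \<and> b=p)"
    and nx: "\<And>a. \<not> S a x" "\<And>b. \<not> S x b" and px: "p \<noteq> x"
  shows "S'\<^sup>*\<^sup>* a b \<Longrightarrow> a \<noteq> x \<Longrightarrow> (b \<noteq> x \<longrightarrow> S\<^sup>*\<^sup>* a b) \<and> (b = x \<longrightarrow> S\<^sup>*\<^sup>* a p)"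
proof (induction rule: rtranclp_induct)
  case base then show ?case by simp
next
  case (step y z)
  have IH: "(y \<noteq> x \<longrightarrow> S\<^sup>*\<^sup>* a y) \<and> (y = x \<longrightarrow> S\<^sup>*\<^sup>* a p)" using step.IH step.prems by blast
  from S'[OF step.hyps(2)] show ?case
  proof (elim disjE)
    assume yz: "S y z"
    have "y \<noteq> x" using yz nx(2) by metis
    moreover have "z \<noteq> x" using yz nx(1) by metis
    ultimately have "S\<^sup>*\<^sup>* a y" using IH by simp
    then have "S\<^sup>*\<^sup>* a z" using yz by (rule rtranclp.rtrancl_into_rtrancl)
    then show ?thesis using \<open>z \<noteq> x\<close> by simp
  next
    assume "y = p \<and> z = x" then show ?thesis using IH px by simp
  next
    assume "y = x \<and> z = p" then show ?thesis using IH px by simp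
  qed
qed

lemma child_attach:
  assumes isol: "\<forall>e\<in>E. x \<notin> e" and px: "p \<noteq> x" and lx: "l \<noteq> x"
    and ch: "child n (insert {p,x} E) l u v"
  shows "(u = p \<and> v = x) \<or> child n E l u v"
proof -
  have nE: "\<not> adj E x y" "\<not> adj E y x" for y using isol by (auto simp: adj_def)
  let ?S' = "\<lambda>a b. a < n \<and> b < n \<and> a \<noteq> v \<and> b \<noteq> v \<and> adj (insert {p,x} E) a b"
  let ?S = "\<lambda>a b. a < n \<and> b < n \<and> a \<noteq> v \<and> b \<noteq> v \<and> adj E a b"
  from ch have A: "adj (insert {p,x} E) u v" "v \<noteq> l" "?S'\<^sup>*\<^sup>* l u"
    unfolding child_def by auto
  show ?thesis
  proof (cases "adj E u v")
    case True
    then have ux: "u \<noteq> x" "v \<noteq> x" using nE by metis+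
    have h1: "?S a b \<or> (a=p \<and> b=x) \<or> (a=x \<and> b=p)" if "?S' a b" for a b
      using that by (auto simp: adj_insert)
    have h2: "\<not> ?S a x" "\<not> ?S x a" for a using nE by simp_all
    have "?S\<^sup>*\<^sup>* l u"
      using leaf_rtranclp[of ?S' ?S p x, OF h1 h2 px A(3) lx] ux by simp
    then show ?thesis using True A(2) unfolding child_def by auto
  next
    case False
    then have "u = p \<and> v = x \<or> u = x \<and> v = p" using A(1) adj_insert by metis
    moreover have False if "u = x" "v = p"
    proof -
      from A(3) that have "?S'\<^sup>*\<^sup>* l x" by simp
      then show False
      proof (cases rule: rtranclp.cases)
        case rtrancl_refl then show False using lx by simp
      next
        case (rtrancl_into_rtrancl y)
        then show False using nE adj_insert that by metis
      qed
    qed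
    ultimately show ?thesis by blast
  qed
qed

definition kk :: "nat \<Rightarrow> config \<Rightarrow> nat" where
  "kk n c = card {i. i < n \<and> fst c i \<noteq> F}"

definition Inv :: "nat \<Rightarrow> nat \<Rightarrow> config \<Rightarrow> bool" where
  "Inv n l c \<longleftrightarrow> l < n \<and> fst c l \<noteq> F \<and> (\<forall>i\<ge>n. fst c i = F) \<and> snd c \<subseteq> pairs n \<and>
     (\<forall>e\<in>snd c. \<forall>i\<in>e. fst c i \<noteq> F) \<and> (\<Sum>i<n. slots (fst c i)) = kk n c + 1 \<and>
     \<not> has_cycle n (snd c) \<and>
     (\<forall>u<n. fst c u \<noteq> F \<longrightarrow> (\<lambda>a b. a < n \<and> b < n \<and> adj (snd c) a b)\<^sup>*\<^sup>* l u) \<and>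
     (\<forall>u<n. card {v. v < n \<and> child n (snd c) l u v} \<le> used (fst c u))"

lemma sum_upd:
  assumes "finite A" "p \<in> A"
  shows "(\<Sum>i\<in>A. g ((f(p:=a)) i)) + g (f p) = (\<Sum>i\<in>A. g (f i)) + (g a :: nat)"
proof -
  have "(\<Sum>i\<in>A. g ((f(p:=a)) i)) = g a + (\<Sum>i\<in>A-{p}. g ((f(p:=a)) i))"
    using assms by (simp add: sum.remove)
  moreover have "(\<Sum>i\<in>A. g (f i)) = g (f p) + (\<Sum>i\<in>A-{p}. g (f i))"
    using assms by (simp add: sum.remove)
  moreover have "(\<Sum>i\<in>A-{p}. g ((f(p:=a)) i)) = (\<Sum>i\<in>A-{p}. g (f i))"
    by (rule sum.cong) auto
  ultimately show ?thesis by simp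
qed

lemma Inv_init: "l < n \<Longrightarrow> Inv n l (init l)"
proof -
  assume l: "l < n"
  have k: "kk n (init l) = 1"
  proof -
    have "{i. i < n \<and> fst (init l) i \<noteq> F} = {l}" using l by (auto simp: init_def)
    then show ?thesis by (simp add: kk_def)
  qed
  have s: "(\<Sum>i<n. slots (fst (init l) i)) = 2"
  proof -
    have "(\<Sum>i<n. slots (fst (init l) i)) = (\<Sum>i<n. if i = l then 2 else 0)"
      by (rule sum.cong) (auto simp: init_def)
    also have "\<dots> = 2" using l by (simp add: sum.delta)
    finally show ?thesis .
  qed
  have nc: "\<not> has_cycle n {}"
  proof
    assume "has_cycle n {}"
    then obtain cs where "3 \<le> length cs" "\<forall>i<length cs. adj {} (cs!i) (cs!((i+1) mod length cs))"
      unfolding has_cycle_def by blast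
    moreover have "0 < length cs" using calculation by linarith
    ultimately have "adj {} (cs!0) (cs!((0+1) mod length cs))" by blast
    then show False by (simp add: adj_def)
  qed
  have conn: "\<forall>u<n. fst (init l) u \<noteq> F \<longrightarrow> (\<lambda>a b. a < n \<and> b < n \<and> adj {} a b)\<^sup>*\<^sup>* l u"
    by (auto simp: init_def)
  have ch: "\<And>u. {v. v < n \<and> child n {} l u v} = {}" by (auto simp: child_def adj_def)
  have i2: "\<forall>i\<ge>n. fst (init l) i = F" using l by (auto simp: init_def)
  have ch': "\<forall>u<n. card {v. v < n \<and> child n (snd (init l)) l u v} \<le> used (fst (init l) u)"
    using ch by (simp add: init_def)
  have "fst (init l) l \<noteq> F" by (simp add: init_def)
  then show ?thesis unfolding Inv_def using l k s nc conn ch' i2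
    by (intro conjI) (simp_all add: init_def)
qed

lemma slots_nxt: "0 < slots s \<Longrightarrow> slots (nxt s) + 1 = slots s"
  by (cases s) auto
lemma used_nxt: "0 < slots s \<Longrightarrow> used (nxt s) = used s + 1"
  by (cases s) auto
lemma nxt_nF: "0 < slots s \<Longrightarrow> nxt s \<noteq> F"
  by (cases s) auto
lemma slots_le2: "slots s \<le> 2" by (cases s) auto
lemma used_le2: "used s \<le> 2" by (cases s) auto

lemma Inv_attach:
  assumes I: "Inv n l c" and pn: "p < n" and xn: "x < n" and xF: "fst c x = F"
    and ps: "0 < slots (fst c p)" and ne: "{p,x} \<notin> snd c"
  shows "Inv n l (attach p x c) \<and> kk n (attach p x c) = kk n c + 1"
proof -
  define E where "E = snd c"
  define f where "f = fst c"
  have px: "p \<noteq> x" using xF ps by auto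
  have pF: "f p \<noteq> F" using ps f_def by auto
  have lx: "l \<noteq> x" using I xF unfolding Inv_def by auto
  have isol: "\<forall>e\<in>E. x \<notin> e" using I xF unfolding Inv_def E_def by auto
  have c': "attach p x c = (f(p := nxt (f p), x := O0), insert {p,x} E)"
    by (simp add: attach_def f_def E_def)
  define f' where "f' = f(p := nxt (f p), x := O0)"
  have nF: "f' i \<noteq> F \<longleftrightarrow> f i \<noteq> F \<or> i = x" for i
    using nxt_nF[OF ps] by (auto simp: f'_def f_def)
  have kset: "{i. i < n \<and> f' i \<noteq> F} = insert x {i. i < n \<and> f i \<noteq> F}"
    using nF xn by auto
  have kk': "kk n (attach p x c) = kk n c + 1"
    unfolding kk_def c' f'_def[symmetric] fst_conv kset using xF
    by (subst card_insert_disjoint) (auto simp: f_def)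
  have sum': "(\<Sum>i<n. slots (f' i)) = (\<Sum>i<n. slots (f i)) + 1"
  proof -
    have a: "(\<Sum>i<n. slots ((f(p := nxt (f p))) i)) + slots (f p) = (\<Sum>i<n. slots (f i)) + slots (nxt (f p))"
      using sum_upd[of "{..<n}" p slots f "nxt (f p)"] pn by simp
    have b: "(\<Sum>i<n. slots (((f(p := nxt (f p)))(x := O0)) i)) + slots ((f(p := nxt (f p))) x) =
       (\<Sum>i<n. slots ((f(p := nxt (f p))) i)) + slots O0"
      using sum_upd[of "{..<n}" x slots "f(p := nxt (f p))" O0] xn by simp
    have "slots ((f(p := nxt (f p))) x) = 0" using px xF f_def by simp
    moreover have sn: "slots (nxt (f p)) + 1 = slots (f p)" using slots_nxt ps f_def by simp
    ultimately show ?thesis using a b unfolding f'_def by simp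
  qed
  have Inv_parts: "l < n" "f l \<noteq> F" "\<forall>i\<ge>n. f i = F" "E \<subseteq> pairs n"
    "\<forall>e\<in>E. \<forall>i\<in>e. f i \<noteq> F" "(\<Sum>i<n. slots (f i)) = kk n c + 1" "\<not> has_cycle n E"
    "\<forall>u<n. f u \<noteq> F \<longrightarrow> (\<lambda>a b. a < n \<and> b < n \<and> adj E a b)\<^sup>*\<^sup>* l u"
    "\<forall>u<n. card {v. v < n \<and> child n E l u v} \<le> used (f u)"
    using I unfolding Inv_def f_def E_def by auto
  let ?E' = "insert {p,x} E"
  let ?R = "\<lambda>a b. a < n \<and> b < n \<and> adj E a b"
  let ?R' = "\<lambda>a b. a < n \<and> b < n \<and> adj ?E' a b"
  have i1: "f' l \<noteq> F" using nF Inv_parts(2) by auto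
  have i2: "\<forall>i\<ge>n. f' i = F" using Inv_parts(3) pn xn by (auto simp: f'_def)
  have i3: "?E' \<subseteq> pairs n" using Inv_parts(4) pn xn px by (auto simp: pairs_def)
  have i4: "\<forall>e\<in>?E'. \<forall>i\<in>e. f' i \<noteq> F" using Inv_parts(5) nF pF by auto
  have i5: "\<not> has_cycle n ?E'" using no_cycle_leaf Inv_parts(7) isol px by blast
  have Rm: "?R\<^sup>*\<^sup>* a b \<Longrightarrow> ?R'\<^sup>*\<^sup>* a b" for a b
    by (erule rtp_mono) (auto simp: adj_def)
  have i6: "\<forall>u<n. f' u \<noteq> F \<longrightarrow> ?R'\<^sup>*\<^sup>* l u"
  proof (intro allI impI)
    fix u assume u: "u < n" "f' u \<noteq> F"
    show "?R'\<^sup>*\<^sup>* l u"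
    proof (cases "u = x")
      case True
      have "?R\<^sup>*\<^sup>* l p" using Inv_parts(8) pn pF by blast
      then have "?R'\<^sup>*\<^sup>* l p" by (rule Rm)
      moreover have "?R' p x" using pn xn px by (auto simp: adj_def)
      ultimately have "?R'\<^sup>*\<^sup>* l x" by (rule rtranclp.rtrancl_into_rtrancl)
      then show ?thesis using True by simp
    next
      case False
      then have "f u \<noteq> F" using nF u by auto
      then have "?R\<^sup>*\<^sup>* l u" using Inv_parts(8) u by blast
      then show ?thesis by (rule Rm)
    qed
  qed
  have i7: "\<forall>u<n. card {v. v < n \<and> child n ?E' l u v} \<le> used (f' u)"
  proof (intro allI impI)
    fix u assume u: "u < n"
    have sub: "{v. v < n \<and> child n ?E' l u v} \<subseteq> {v. v < n \<and> child n E l u v} \<union> (if u = p then {x} else {})"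
    proof
      fix v assume "v \<in> {v. v < n \<and> child n ?E' l u v}"
      then have v: "v < n" "child n ?E' l u v" by auto
      from child_attach[OF isol px lx v(2)] v(1)
      show "v \<in> {v. v < n \<and> child n E l u v} \<union> (if u = p then {x} else {})" by auto
    qed
    have fin: "finite {v. v < n \<and> child n E l u v}" by simp
    have cle: "card {v. v < n \<and> child n ?E' l u v} \<le> card {v. v < n \<and> child n E l u v} + (if u = p then 1 else 0)"
    proof -
      have "card {v. v < n \<and> child n ?E' l u v} \<le> card ({v. v < n \<and> child n E l u v} \<union> (if u = p then {x} else {}))"
        by (rule card_mono[OF _ sub]) simp
      also have "\<dots> \<le> card {v. v < n \<and> child n E l u v} + card (if u = p then {x} else {} :: nat set)"
        by (rule card_Un_le)
      finally show ?thesis by (cases "u = p") auto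
    qed
    show "card {v. v < n \<and> child n ?E' l u v} \<le> used (f' u)"
    proof (cases "u = p")
      case True
      have "used (f' p) = used (f p) + 1" using used_nxt ps px by (simp add: f'_def f_def)
      moreover have "card {v. v < n \<and> child n E l p v} \<le> used (f p)" using Inv_parts(9) pn by blast
      ultimately show ?thesis using cle True by simp
    next
      case False
      note nup = False
      show ?thesis
      proof (cases "u = x")
        case True
        have "\<not> adj E x v" for v using isol by (auto simp: adj_def)
        then have "{v. v < n \<and> child n E l u v} = {}" using True unfolding child_def by blast
        then have c0: "card {v. v < n \<and> child n E l u v} = 0" by (metis card.empty)
        have "(if u = p then 1 else 0) = (0::nat)" using nup by simp
        then have "card {v. v < n \<and> child n ?E' l u v} \<le> 0" using cle c0 by linarith
        then show ?thesis by linarith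
      next
        case False
        have "card {v. v < n \<and> child n E l u v} \<le> used (f u)" using Inv_parts(9) u by blast
        moreover have "f' u = f u" using False nup by (simp add: f'_def)
        ultimately show ?thesis using cle nup by simp
      qed
    qed
  qed
  have kk'': "kk n (f', ?E') = kk n c + 1" using kk' c' f'_def by simp
  have i0: "(\<Sum>i<n. slots (f' i)) = kk n (f', ?E') + 1" using sum' kk'' Inv_parts(6) by simp
  have "Inv n l (f', ?E')"
    unfolding Inv_def fst_conv snd_conv
    using Inv_parts(1) i0 i1 i2 i3 i4 i5 i6 i7 by (intro conjI) assumption+
  then have "Inv n l (attach p x c)" using c' f'_def by simp
  then show ?thesis using kk' by simp
qed

lemma step_cases:
  assumes "Inv n l c" "step n c c'"
  shows "c' = c \<or> (Inv n l c' \<and> kk n c' = kk n c + 1)"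
proof -
  obtain u v where uv: "u < n" "v < n" "c' = interact u v c" using assms(2) unfolding step_def by blast
  from interact_cases[of u v c] show ?thesis
  proof
    assume "interact u v c = c" then show ?thesis using uv by simp
  next
    assume "\<exists>p x. (p = u \<and> x = v \<or> p = v \<and> x = u) \<and> fst c x = F \<and>
      0 < slots (fst c p) \<and> {p,x} \<notin> snd c \<and> interact u v c = attach p x c"
    then obtain p x where px: "p < n" "x < n" "fst c x = F" "0 < slots (fst c p)" "{p,x} \<notin> snd c"
      "c' = attach p x c" using uv by auto
    then show ?thesis using Inv_attach[OF assms(1) px(1-5)] by simp
  qed
qed

lemma kk_le: "kk n c \<le> n"
proof -
  have "{i. i < n \<and> fst c i \<noteq> F} \<subseteq> {..<n}" by auto
  then have "card {i. i < n \<and> fst c i \<noteq> F} \<le> card {..<n}" by (rule card_mono[rotated]) simp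
  then show ?thesis by (simp add: kk_def)
qed

lemma kk_full: "kk n c = n \<Longrightarrow> i < n \<Longrightarrow> fst c i \<noteq> F"
proof -
  assume k: "kk n c = n" and i: "i < n"
  have sub: "{i. i < n \<and> fst c i \<noteq> F} \<subseteq> {..<n}" by auto
  have "card {i. i < n \<and> fst c i \<noteq> F} = card {..<n}" using k by (simp add: kk_def)
  then have "{i. i < n \<and> fst c i \<noteq> F} = {..<n}" using card_subset_eq[OF _ sub] by simp
  then show ?thesis using i by auto
qed

lemma exists_move:
  assumes I: "Inv n l c" and k: "kk n c < n"
  shows "\<exists>p x. p < n \<and> x < n \<and> fst c x = F \<and> 0 < slots (fst c p) \<and> {p,x} \<notin> snd c"
proof -
  have "\<exists>x. x < n \<and> fst c x = F"
  proof (rule ccontr)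
    assume "\<not> ?thesis"
    then have "\<forall>i<n. fst c i \<noteq> F" by blast
    then have "{i. i < n \<and> fst c i \<noteq> F} = {..<n}" by auto
    then show False using k by (simp add: kk_def)
  qed
  then obtain x where x: "x < n" "fst c x = F" by blast
  have s: "(\<Sum>i<n. slots (fst c i)) = kk n c + 1" using I unfolding Inv_def by blast
  have "\<exists>p. p < n \<and> 0 < slots (fst c p)"
  proof (rule ccontr)
    assume "\<not> ?thesis"
    then have "\<forall>i<n. slots (fst c i) = 0" by auto
    then have "(\<Sum>i<n. slots (fst c i)) = 0" by simp
    then show False using s by simp
  qed
  then obtain p where p: "p < n" "0 < slots (fst c p)" by blast
  have "{p,x} \<notin> snd c" using I x unfolding Inv_def by auto
  then show ?thesis using p x by blast
qed

lemma done_noop: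
  assumes "Inv n l c" "kk n c = n" "u < n" "v < n"
  shows "interact u v c = c"
proof -
  from interact_cases[of u v c] show ?thesis
  proof
    assume "\<exists>p x. (p = u \<and> x = v \<or> p = v \<and> x = u) \<and> fst c x = F \<and>
      0 < slots (fst c p) \<and> {p,x} \<notin> snd c \<and> interact u v c = attach p x c"
    then obtain x where "x < n" "fst c x = F" using assms by auto
    then show ?thesis using kk_full[OF assms(2)] by blast
  qed simp
qed

lemma rtp_sym: "(\<And>a b. r a b \<Longrightarrow> r b a) \<Longrightarrow> r\<^sup>*\<^sup>* a b \<Longrightarrow> r\<^sup>*\<^sup>* b a"
proof -
  assume sym: "\<And>a b. r a b \<Longrightarrow> r b a"
  show "r\<^sup>*\<^sup>* a b \<Longrightarrow> r\<^sup>*\<^sup>* b a"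
  proof (induction rule: rtranclp_induct)
    case base then show ?case by simp
  next
    case (step y z)
    have "r z y" using sym step.hyps(2) by blast
    then show ?case using step.IH by (rule converse_rtranclp_into_rtranclp)
  qed
qed

lemma done_treeT:
  assumes I: "Inv n l c" and k: "kk n c = n"
  shows "treeT n (snd c)"
proof -
  let ?R = "\<lambda>a b. a < n \<and> b < n \<and> adj (snd c) a b"
  have ln: "l < n" using I unfolding Inv_def by blast
  have reach: "\<forall>u<n. fst c u \<noteq> F \<longrightarrow> ?R\<^sup>*\<^sup>* l u" using I unfolding Inv_def by blast
  have symR: "?R a b \<Longrightarrow> ?R b a" for a b by (auto simp: adj_def insert_commute)
  have conn: "connected_graph n (snd c)"
    unfolding connected_graph_def
  proof (intro allI impI)
    fix u v assume u: "u < n" and v: "v < n"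
    have "?R\<^sup>*\<^sup>* l u" using reach u kk_full[OF k u] by blast
    then have "?R\<^sup>*\<^sup>* u l" using rtp_sym[of ?R] symR by blast
    moreover have "?R\<^sup>*\<^sup>* l v" using reach v kk_full[OF k v] by blast
    ultimately show "?R\<^sup>*\<^sup>* u v" by (rule rtranclp_trans)
  qed
  have "snd c \<subseteq> pairs n" "\<not> has_cycle n (snd c)"
    "\<forall>u<n. card {v. v < n \<and> child n (snd c) l u v} \<le> used (fst c u)"
    using I unfolding Inv_def by blast+
  moreover have "\<forall>u<n. card {v. v < n \<and> child n (snd c) l u v} \<le> 2"
    using calculation(3) used_le2 le_trans by blast
  ultimately show ?thesis unfolding treeT_def is_tree_def using conn ln by blast
qed

lemma iso_refl: "iso n G G"
  unfolding iso_def by (rule exI[of _ id]) simp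

lemma exec_Inv: "execution n l C \<Longrightarrow> l < n \<Longrightarrow> Inv n l (C t)"
proof (induction t)
  case 0 then show ?case using Inv_init by (simp add: execution_def)
next
  case (Suc t)
  have st: "step n (C t) (C (Suc t))" using Suc.prems by (simp add: execution_def)
  have "Inv n l (C t)" using Suc.IH Suc.prems by blast
  then have "C (Suc t) = C t \<or> (Inv n l (C (Suc t)) \<and> kk n (C (Suc t)) = kk n (C t) + 1)"
    by (rule step_cases[OF _ st])
  then show ?case using \<open>Inv n l (C t)\<close> by auto
qed

lemma fair_stab:
  assumes n: "2 \<le> n" and l: "l < n" and ex: "execution n l C" and fa: "fair n C"
  shows "\<exists>G. treeT n G \<and> stabilises n C G"
proof -
  have I: "Inv n l (C t)" for t using exec_Inv[OF ex l] .
  have st: "step n (C t) (C (Suc t))" for t using ex by (simp add: execution_def)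
  have sc: "C (Suc t) = C t \<or> kk n (C (Suc t)) = kk n (C t) + 1" for t
    using step_cases[OF I st] by blast
  have monok: "t \<le> t' \<Longrightarrow> kk n (C t) \<le> kk n (C t')" for t t'
  proof (induction t' rule: dec_induct)
    case base then show ?case by simp
  next
    case (step m) then show ?case using sc[of m] by auto
  qed
  define K where "K = range (\<lambda>t. kk n (C t))"
  have finK: "finite K" unfolding K_def by (rule finite_subset[of _ "{..n}"]) (auto simp: kk_le)
  have neK: "K \<noteq> {}" unfolding K_def by simp
  obtain t0 where t0: "kk n (C t0) = Max K" using Max_in[OF finK neK] unfolding K_def by auto
  have kt: "t \<ge> t0 \<Longrightarrow> kk n (C t) = kk n (C t0)" for t
  proof -
    assume "t \<ge> t0"
    then have "kk n (C t0) \<le> kk n (C t)" by (rule monok)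
    moreover have "kk n (C t) \<le> Max K" by (rule Max_ge[OF finK]) (simp add: K_def)
    ultimately show ?thesis using t0 by simp
  qed
  have const: "t \<ge> t0 \<Longrightarrow> C t = C t0" for t
  proof (induction t rule: dec_induct)
    case base then show ?case by simp
  next
    case (step m)
    have "kk n (C (Suc m)) = kk n (C m)" using kt[of "Suc m"] kt[of m] step.hyps by simp
    then have "C (Suc m) = C m" using sc[of m] by auto
    then show ?case using step.IH by simp
  qed
  have kdone: "kk n (C t0) = n"
  proof (rule ccontr)
    assume "kk n (C t0) \<noteq> n"
    then have "kk n (C t0) < n" using kk_le[of n "C t0"] by simp
    then obtain p x where px: "p < n" "x < n" "fst (C t0) x = F" "0 < slots (fst (C t0) p)" "{p,x} \<notin> snd (C t0)"
      using exists_move[OF I[of t0]] by blast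
    have pxne: "p \<noteq> x" using px by auto
    define c' where "c' = attach p x (C t0)"
    have eq: "interact p x (C t0) = c'" unfolding c'_def by (rule interact_attach(1)[OF px(3) px(4) px(5)])
    have "step n (C t0) c'"
      unfolding step_def by (rule exI[of _ p], rule exI[of _ x], intro conjI px(1) px(2) pxne eq[symmetric])
    moreover have "infinite {t. C t = C t0}"
    proof -
      have "{t0..} \<subseteq> {t. C t = C t0}" using const by blast
      then show ?thesis using infinite_Ici finite_subset by blast
    qed
    ultimately have inf: "infinite {t. C t = c'}" using fa unfolding fair_def by blast
    have "fst c' x = O0" by (simp add: c'_def attach_def)
    then have "c' \<noteq> C t0" using px(3) by auto
    then have "{t. C t = c'} \<subseteq> {..<t0}" using const by (metis (mono_tags) lessThan_iff mem_Collect_eq not_le subsetI)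
    then have "finite {t. C t = c'}" using finite_subset by blast
    then show False using inf by simp
  qed
  have "treeT n (snd (C t0))" using done_treeT[OF I kdone] .
  moreover have "stabilises n C (snd (C t0))"
    unfolding stabilises_def using const iso_refl by metis
  ultimately show ?thesis by blast
qed

section \<open>Paths and cycles\<close>

lemma simple_path:
  "Q\<^sup>*\<^sup>* x y \<Longrightarrow> \<exists>ps. ps \<noteq> [] \<and> hd ps = x \<and> last ps = y \<and> distinct ps \<and>
      (\<forall>i. Suc i < length ps \<longrightarrow> Q (ps!i) (ps!Suc i))"
proof (induction rule: rtranclp_induct)
  case base
  show ?case by (rule exI[of _ "[x]"]) simp
next
  case (step y z)
  then obtain ps where ps: "ps \<noteq> []" "hd ps = x" "last ps = y" "distinct ps"
    "\<forall>i. Suc i < length ps \<longrightarrow> Q (ps!i) (ps!Suc i)" by blast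
  show ?case
  proof (cases "z \<in> set ps")
    case True
    then obtain k where k: "k < length ps" "ps!k = z" by (auto simp: in_set_conv_nth)
    define qs where "qs = take (Suc k) ps"
    have qs_eq: "qs = take k ps @ [ps!k]" using k by (simp add: qs_def take_Suc_conv_app_nth)
    have "qs \<noteq> []" using qs_eq by simp
    moreover have "hd qs = x" using ps k by (simp add: qs_def hd_take)
    moreover have "last qs = z" using qs_eq k by simp
    moreover have "distinct qs" using ps by (simp add: qs_def)
    moreover have "\<forall>i. Suc i < length qs \<longrightarrow> Q (qs!i) (qs!Suc i)"
      using ps(5) k by (auto simp: qs_def)
    ultimately show ?thesis by blast
  next
    case False
    define qs where "qs = ps @ [z]"
    have "qs \<noteq> []" by (simp add: qs_def)
    moreover have "hd qs = x" using ps by (simp add: qs_def)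
    moreover have "last qs = z" by (simp add: qs_def)
    moreover have "distinct qs" using ps False by (simp add: qs_def)
    moreover have "\<forall>i. Suc i < length qs \<longrightarrow> Q (qs!i) (qs!Suc i)"
    proof (intro allI impI)
      fix i assume i: "Suc i < length qs"
      show "Q (qs!i) (qs!Suc i)"
      proof (cases "Suc i < length ps")
        case True
        then show ?thesis using ps(5) by (simp add: qs_def nth_append)
      next
        case False
        then have ii: "Suc i = length ps" using i by (simp add: qs_def)
        then have "i = length ps - 1" by simp
        then have "qs!i = last ps" using ps(1) by (simp add: qs_def nth_append last_conv_nth)
        moreover have "qs!Suc i = z" using ii by (simp add: qs_def nth_append)
        ultimately show ?thesis using ps(3) step.hyps(2) by simp
      qed
    qed
    ultimately show ?thesis by blast
  qed
qed

lemma cycle_from_path: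
  assumes path: "(\<lambda>u v. u < n \<and> v < n \<and> u \<noteq> b \<and> v \<noteq> b \<and> adj G u v)\<^sup>*\<^sup>* a y"
    and ay: "a \<noteq> y" and ab: "adj G a b" and yb: "adj G y b" and bn: "b < n"
  shows "has_cycle n G"
proof -
  let ?Q = "\<lambda>u v. u < n \<and> v < n \<and> u \<noteq> b \<and> v \<noteq> b \<and> adj G u v"
  obtain ps where ps: "ps \<noteq> []" "hd ps = a" "last ps = y" "distinct ps"
    "\<forall>i. Suc i < length ps \<longrightarrow> ?Q (ps!i) (ps!Suc i)" using simple_path[OF path] by blast
  have len: "2 \<le> length ps"
  proof (rule ccontr)
    assume "\<not> 2 \<le> length ps"
    moreover have "0 < length ps" using ps(1) by simp
    ultimately have "length ps = 1" by linarith
    then obtain z where "ps = [z]" by (metis One_nat_def length_0_conv length_Suc_conv)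
    then have "hd ps = last ps" by simp
    then show False using ps ay by simp
  qed
  have elem: "ps!i \<noteq> b \<and> ps!i < n" if "i < length ps" for i
  proof (cases "Suc i < length ps")
    case True then show ?thesis using ps(5) by blast
  next
    case False
    then have "i = Suc (i - 1)" "Suc (i-1) < length ps" using len that by auto
    then show ?thesis using ps(5) by metis
  qed
  define cs where "cs = ps @ [b]"
  have lcs: "length cs = Suc (length ps)" by (simp add: cs_def)
  have "3 \<le> length cs" using len lcs by simp
  moreover have "distinct cs"
  proof -
    have "b \<notin> set ps" using elem by (auto simp: in_set_conv_nth)
    then show ?thesis using ps(4) by (simp add: cs_def)
  qed
  moreover have "set cs \<subseteq> {0..<n}"
    using elem bn by (auto simp: cs_def in_set_conv_nth)
  moreover have "\<forall>i<length cs. adj G (cs ! i) (cs ! ((i + 1) mod length cs))"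
  proof (intro allI impI)
    fix i assume i: "i < length cs"
    show "adj G (cs ! i) (cs ! ((i + 1) mod length cs))"
    proof (cases "Suc i < length ps")
      case True
      then have "?Q (ps!i) (ps!Suc i)" using ps(5) by blast
      moreover have "(i + 1) mod length cs = Suc i" using True lcs by simp
      ultimately show ?thesis using True by (simp add: cs_def nth_append)
    next
      case False
      show ?thesis
      proof (cases "Suc i = length ps")
        case True
        have "i = length ps - 1" using True by simp
        then have "cs ! i = y" using True ps(1,3) by (simp add: cs_def nth_append last_conv_nth)
        moreover have "(i + 1) mod length cs = length ps" using True lcs by simp
        moreover have "cs ! length ps = b" by (simp add: cs_def)
        ultimately show ?thesis using yb by simp
      next
        case False
        then have ii: "i = length ps" using \<open>\<not> Suc i < length ps\<close> i lcs by simp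
        then have "cs ! i = b" by (simp add: cs_def)
        moreover have "(i + 1) mod length cs = 0" using ii lcs by simp
        moreover have "cs ! 0 = a" using ps(1,2) by (simp add: cs_def nth_append hd_conv_nth)
        ultimately show ?thesis using ab by (simp add: adj_def insert_commute)
      qed
    qed
  qed
  ultimately show ?thesis unfolding has_cycle_def by blast
qed

lemma exit_edge:
  "Q\<^sup>*\<^sup>* x y \<Longrightarrow> x \<in> S \<Longrightarrow> y \<notin> S \<Longrightarrow> \<exists>a b. Q a b \<and> a \<in> S \<and> b \<notin> S"
proof (induction rule: rtranclp_induct)
  case base then show ?case by simp
next
  case (step y z)
  then show ?case by blast
qed

section \<open>Construction\<close>

definition sg :: "nat \<Rightarrow> nat \<Rightarrow> nat \<Rightarrow> nat" where
  "sg r l i = (if i = r then l else if i = l then r else i)"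

lemma sg_sg[simp]: "sg r l (sg r l i) = i" by (simp add: sg_def)
lemma sg_inj: "sg r l i = sg r l j \<longleftrightarrow> i = j" by (metis sg_sg)
lemma sg_lt: "r < n \<Longrightarrow> l < n \<Longrightarrow> i < n \<Longrightarrow> sg r l i < n" by (simp add: sg_def)
lemma sg_r[simp]: "sg r l r = l" by (simp add: sg_def)

definition cnt :: "nat \<Rightarrow> nat set set \<Rightarrow> nat \<Rightarrow> nat set \<Rightarrow> nat \<Rightarrow> nat" where
  "cnt n G r S i = card {w \<in> S. child n G r i w}"

definition stt :: "nat \<Rightarrow> nat \<Rightarrow> nat \<Rightarrow> st" where
  "stt r i m = (if i = r then (if m = 0 then L0 else if m = 1 then L1 else L2)
                else (if m = 0 then O0 else if m = 1 then O1 else O2))"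

lemma stt_slots: "m \<le> 1 \<Longrightarrow> 0 < slots (stt r i m)" by (auto simp: stt_def)
lemma stt_nxt: "m \<le> 1 \<Longrightarrow> nxt (stt r i m) = stt r i (Suc m)" by (auto simp: stt_def)
lemma stt_nF: "stt r i m \<noteq> F" by (auto simp: stt_def)

definition J :: "nat \<Rightarrow> nat set set \<Rightarrow> nat \<Rightarrow> nat \<Rightarrow> nat set \<Rightarrow> config \<Rightarrow> bool" where
  "J n G r l S c \<longleftrightarrow> r \<in> S \<and> S \<subseteq> {..<n} \<and>
     (\<forall>i<n. (i \<in> S \<longrightarrow> (\<exists>m. m \<le> cnt n G r S i \<and> fst c (sg r l i) = stt r i m)) \<and>
             (i \<notin> S \<longrightarrow> fst c (sg r l i) = F)) \<and>
     snd c = {{sg r l a, sg r l b} | a b. a \<in> S \<and> b \<in> S \<and> {a, b} \<in> G} \<and>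
     (\<forall>a\<in>S. (\<lambda>x y. x \<in> S \<and> y \<in> S \<and> adj G x y)\<^sup>*\<^sup>* r a)"

lemma pairs_ne: "{a, b} \<in> pairs n \<Longrightarrow> a \<noteq> b \<and> a < n \<and> b < n"
  unfolding pairs_def by (auto simp: doubleton_eq_iff)

lemma J_init:
  assumes "r < n" "l < n" "G \<subseteq> pairs n"
  shows "J n G r l {r} (init l)"
proof -
  have e: "{{sg r l a, sg r l b} | a b. a \<in> {r} \<and> b \<in> {r} \<and> {a, b} \<in> G} = {}"
    using assms(3) pairs_ne by fastforce
  have "\<forall>i<n. (i \<in> {r} \<longrightarrow> (\<exists>m. m \<le> cnt n G r {r} i \<and> fst (init l) (sg r l i) = stt r i m)) \<and>
             (i \<notin> {r} \<longrightarrow> fst (init l) (sg r l i) = F)"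
  proof (intro allI impI conjI)
    fix i assume "i < n" "i \<in> {r}"
    then show "\<exists>m. m \<le> cnt n G r {r} i \<and> fst (init l) (sg r l i) = stt r i m"
      by (intro exI[of _ 0]) (simp add: init_def stt_def)
  next
    fix i assume "i < n" "i \<notin> {r}"
    then have "sg r l i \<noteq> l" by (metis sg_r sg_inj singletonI)
    then show "fst (init l) (sg r l i) = F" by (simp add: init_def)
  qed
  then show ?thesis unfolding J_def using assms(1) e by (simp add: init_def)
qed

context
  fixes n G r l
  assumes tree: "is_tree n G" and rn: "r < n" and ln: "l < n"
    and deg: "\<forall>u<n. card {v. v < n \<and> child n G r u v} \<le> 2"
begin

lemma Gpairs: "G \<subseteq> pairs n" using tree unfolding is_tree_def by blast
lemma Gconn: "connected_graph n G" using tree unfolding is_tree_def by blast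
lemma Gnc: "\<not> has_cycle n G" using tree unfolding is_tree_def by blast

lemma J_step:
  assumes J: "J n G r l S c" and cS: "card S < n"
  shows "\<exists>b c'. b \<notin> S \<and> J n G r l (insert b S) c' \<and> step n c c'"
proof -
  let ?s = "sg r l"
  have rS: "r \<in> S" and Sn: "S \<subseteq> {..<n}" using J unfolding J_def by blast+
  have st: "\<forall>i<n. (i \<in> S \<longrightarrow> (\<exists>m. m \<le> cnt n G r S i \<and> fst c (?s i) = stt r i m)) \<and>
             (i \<notin> S \<longrightarrow> fst c (?s i) = F)" using J unfolding J_def by blast
  have ed: "snd c = {{?s a, ?s b} | a b. a \<in> S \<and> b \<in> S \<and> {a, b} \<in> G}" using J unfolding J_def by blast
  have cn: "\<forall>a\<in>S. (\<lambda>x y. x \<in> S \<and> y \<in> S \<and> adj G x y)\<^sup>*\<^sup>* r a" using J unfolding J_def by blast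
  have finS: "finite S" using Sn finite_subset by blast
  obtain b0 where b0: "b0 < n" "b0 \<notin> S"
  proof -
    have "S \<noteq> {..<n}" using cS by auto
    then show ?thesis using Sn that by blast
  qed
  have "(\<lambda>a b. a < n \<and> b < n \<and> adj G a b)\<^sup>*\<^sup>* r b0" using Gconn rn b0 unfolding connected_graph_def by blast
  then obtain a b where ab: "a < n" "b < n" "adj G a b" "a \<in> S" "b \<notin> S"
    using exit_edge[of _ r b0 S] rS b0 by blast
  have Gab: "{a, b} \<in> G" using ab(3) by (simp add: adj_def)
  have brr: "b \<noteq> r" using rS ab by blast
  have pathS: "(\<lambda>x y. x < n \<and> y < n \<and> x \<noteq> b \<and> y \<noteq> b \<and> adj G x y)\<^sup>*\<^sup>* r y" if "y \<in> S" for y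
  proof -
    have "(\<lambda>x y. x \<in> S \<and> y \<in> S \<and> adj G x y)\<^sup>*\<^sup>* r y" using cn that by blast
    then show ?thesis by (rule rtp_mono) (use Sn ab(5) in auto)
  qed
  have chab: "child n G r a b" unfolding child_def using ab(3) brr pathS[OF ab(4)] by blast
  have uniq: "y = a" if "y \<in> S" "{y, b} \<in> G" for y
  proof (rule ccontr)
    assume ya: "y \<noteq> a"
    let ?Q = "\<lambda>x y. x < n \<and> y < n \<and> x \<noteq> b \<and> y \<noteq> b \<and> adj G x y"
    have symQ: "?Q u v \<Longrightarrow> ?Q v u" for u v by (auto simp: adj_def insert_commute)
    have "?Q\<^sup>*\<^sup>* a r" using rtp_sym[of ?Q] symQ pathS[OF ab(4)] by blast
    then have "?Q\<^sup>*\<^sup>* a y" using pathS[OF that(1)] by (rule rtranclp_trans)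
    moreover have "adj G y b" using that ab(5) by (auto simp: adj_def)
    ultimately have "has_cycle n G" by (rule cycle_from_path[of n b G a y, OF _ ya[symmetric] ab(3) _ ab(2)])
    then show False using Gnc by blast
  qed
  have cnt_le: "cnt n G r S a \<le> 1"
  proof -
    have sub: "insert b {w \<in> S. child n G r a w} \<subseteq> {v. v < n \<and> child n G r a v}"
      using chab ab(2) Sn by auto
    have fin: "finite {v. v < n \<and> child n G r a v}" by simp
    have "card (insert b {w \<in> S. child n G r a w}) \<le> card {v. v < n \<and> child n G r a v}"
      by (rule card_mono[OF fin sub])
    moreover have "card {v. v < n \<and> child n G r a v} \<le> 2" using deg ab(1) by blast
    ultimately have "card (insert b {w \<in> S. child n G r a w}) \<le> 2" by linarith
    moreover have "card (insert b {w \<in> S. child n G r a w}) = Suc (cnt n G r S a)"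
      using finS ab(5) by (simp add: cnt_def)
    ultimately show ?thesis by simp
  qed
  obtain m where m: "m \<le> cnt n G r S a" "fst c (?s a) = stt r a m" using st ab(1,4) by blast
  have m1: "m \<le> 1" using m cnt_le by simp
  have sbF: "fst c (?s b) = F" using st ab(2,5) by blast
  have nedge: "{?s a, ?s b} \<notin> snd c"
  proof
    assume "{?s a, ?s b} \<in> snd c"
    then obtain x y where "{?s a, ?s b} = {?s x, ?s y}" "x \<in> S" "y \<in> S" using ed by blast
    then have "?s b = ?s x \<or> ?s b = ?s y" by (auto simp: doubleton_eq_iff)
    then show False using \<open>x \<in> S\<close> \<open>y \<in> S\<close> ab(5) sg_inj by metis
  qed
  define c' where "c' = attach (?s a) (?s b) c"
  have int: "interact (?s a) (?s b) c = c'"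
    unfolding c'_def using interact_attach(1)[OF sbF _ nedge] stt_slots[OF m1] m(2) by simp
  have sab: "?s a \<noteq> ?s b" using sg_inj ab(4,5) by metis
  have stp: "step n c c'" unfolding step_def
    by (rule exI[of _ "?s a"], rule exI[of _ "?s b"], intro conjI sg_lt rn ln ab(1) ab(2) sab int[symmetric])
  let ?S' = "insert b S"
  have fst': "fst c' = (fst c)(?s a := stt r a (Suc m), ?s b := O0)"
    using stt_nxt[OF m1] m(2) by (simp add: c'_def attach_def)
  have snd': "snd c' = insert {?s a, ?s b} (snd c)" by (simp add: c'_def attach_def)
  have cnt_mono: "cnt n G r S i \<le> cnt n G r ?S' i" for i
    unfolding cnt_def by (rule card_mono) (use finS in auto)
  have cnt_a: "cnt n G r ?S' a = Suc (cnt n G r S a)"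
  proof -
    have "{w \<in> ?S'. child n G r a w} = insert b {w \<in> S. child n G r a w}" using chab by auto
    then show ?thesis using finS ab(5) by (simp add: cnt_def)
  qed
  have J1: "r \<in> ?S'" "?S' \<subseteq> {..<n}" using rS Sn ab(2) by auto
  have J2: "\<forall>i<n. (i \<in> ?S' \<longrightarrow> (\<exists>m. m \<le> cnt n G r ?S' i \<and> fst c' (?s i) = stt r i m)) \<and>
             (i \<notin> ?S' \<longrightarrow> fst c' (?s i) = F)"
  proof (intro allI impI conjI)
    fix i assume i: "i < n" "i \<in> ?S'"
    show "\<exists>m. m \<le> cnt n G r ?S' i \<and> fst c' (?s i) = stt r i m"
    proof (cases "i = b")
      case True
      then show ?thesis using brr by (intro exI[of _ 0]) (simp add: fst' stt_def)
    next
      case False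
      note ib = False
      show ?thesis
      proof (cases "i = a")
        case True
        then show ?thesis using m(1) cnt_a sab by (intro exI[of _ "Suc m"]) (simp add: fst')
      next
        case False
        then have "i \<in> S" using i ib by simp
        then obtain m' where "m' \<le> cnt n G r S i" "fst c (?s i) = stt r i m'" using st i by blast
        moreover have "?s i \<noteq> ?s a" "?s i \<noteq> ?s b" using False ib by (auto simp: sg_inj)
        ultimately show ?thesis using cnt_mono[of i] by (intro exI[of _ m']) (simp add: fst')
      qed
    qed
  next
    fix i assume i: "i < n" "i \<notin> ?S'"
    then have "?s i \<noteq> ?s a" "?s i \<noteq> ?s b" using ab(4) by (auto simp: sg_inj)
    then show "fst c' (?s i) = F" using st i by (simp add: fst')
  qed
  have J3: "snd c' = {{?s x, ?s y} | x y. x \<in> ?S' \<and> y \<in> ?S' \<and> {x, y} \<in> G}"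
  proof
    show "snd c' \<subseteq> {{?s x, ?s y} | x y. x \<in> ?S' \<and> y \<in> ?S' \<and> {x, y} \<in> G}"
      using Gab ab(4) unfolding snd' ed by blast
  next
    show "{{?s x, ?s y} | x y. x \<in> ?S' \<and> y \<in> ?S' \<and> {x, y} \<in> G} \<subseteq> snd c'"
    proof
      fix e assume "e \<in> {{?s x, ?s y} | x y. x \<in> ?S' \<and> y \<in> ?S' \<and> {x, y} \<in> G}"
      then obtain x y where xy: "e = {?s x, ?s y}" "x \<in> ?S'" "y \<in> ?S'" "{x, y} \<in> G" by blast
      have xny: "x \<noteq> y" using xy(4) Gpairs pairs_ne by blast
      show "e \<in> snd c'"
      proof (cases "x = b")
        case True
        then have "y \<in> S" using xy xny by simp
        moreover have "{y, b} \<in> G" using xy(4) True by (simp add: insert_commute)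
        ultimately have "y = a" using uniq by blast
        then show ?thesis using True xy(1) by (simp add: snd' insert_commute)
      next
        case False
        note xb = False
        show ?thesis
        proof (cases "y = b")
          case True
          then have "x \<in> S" using xy xb by simp
          moreover have "{x, b} \<in> G" using xy(4) True by simp
          ultimately have "x = a" using uniq by blast
          then show ?thesis using True xy(1) by (simp add: snd')
        next
          case False
          then have "e \<in> snd c" using xb xy unfolding ed by auto
          then show ?thesis by (simp add: snd')
        qed
      qed
    qed
  qed
  have J4: "\<forall>x\<in>?S'. (\<lambda>x y. x \<in> ?S' \<and> y \<in> ?S' \<and> adj G x y)\<^sup>*\<^sup>* r x"
  proof
    fix x assume x: "x \<in> ?S'"
    let ?P = "\<lambda>x y. x \<in> ?S' \<and> y \<in> ?S' \<and> adj G x y"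
    have pm: "?P\<^sup>*\<^sup>* r y" if "y \<in> S" for y
    proof -
      have "(\<lambda>x y. x \<in> S \<and> y \<in> S \<and> adj G x y)\<^sup>*\<^sup>* r y" using cn that by blast
      then show ?thesis by (rule rtp_mono) auto
    qed
    show "?P\<^sup>*\<^sup>* r x"
    proof (cases "x = b")
      case True
      have "?P\<^sup>*\<^sup>* r a" using pm ab(4) by blast
      moreover have "?P a b" using ab by simp
      ultimately show ?thesis using True by (simp add: rtranclp.rtrancl_into_rtrancl)
    next
      case False then show ?thesis using pm x by simp
    qed
  qed
  have "J n G r l ?S' c'" unfolding J_def using J1 J2 J3 J4 by blast
  then show ?thesis using stp ab(5) by blast
qed

end

lemma constructible:
  assumes n2: "2 \<le> n" and ln: "l < n" and T: "treeT n G"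
  shows "\<exists>C. execution n l C \<and> stabilises n C G"
proof -
  obtain r where rn: "r < n" and deg: "\<forall>u<n. card {v. v < n \<and> child n G r u v} \<le> 2"
    using T unfolding treeT_def by blast
  have tree: "is_tree n G" using T unfolding treeT_def by blast
  have Gp: "G \<subseteq> pairs n" using tree unfolding is_tree_def by blast
  let ?s = "sg r l"
  have build: "Suc j \<le> n \<Longrightarrow> \<exists>S C. card S = Suc j \<and> J n G r l S (C j) \<and> C 0 = init l \<and>
                  (\<forall>t<j. step n (C t) (C (Suc t)))" for j
  proof (induction j)
    case 0
    show ?case
      by (rule exI[of _ "{r}"], rule exI[of _ "\<lambda>_. init l"]) (simp add: J_init[OF rn ln Gp])
  next
    case (Suc j)
    then obtain S C where SC: "card S = Suc j" "J n G r l S (C j)" "C 0 = init l"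
      "\<forall>t<j. step n (C t) (C (Suc t))" by auto
    have "card S < n" using SC(1) Suc.prems by simp
    then obtain b c' where bc: "b \<notin> S" "J n G r l (insert b S) c'" "step n (C j) c'"
      using J_step[OF tree rn ln deg SC(2)] by blast
    have "S \<subseteq> {..<n}" using SC(2) unfolding J_def by blast
    then have finS: "finite S" by (rule finite_subset) simp
    define C' where "C' = C(Suc j := c')"
    have "card (insert b S) = Suc (Suc j)" using finS bc(1) SC(1) by simp
    moreover have "J n G r l (insert b S) (C' (Suc j))" using bc(2) by (simp add: C'_def)
    moreover have "C' 0 = init l" using SC(3) by (simp add: C'_def)
    moreover have "\<forall>t<Suc j. step n (C' t) (C' (Suc t))"
    proof (intro allI impI)
      fix t assume t: "t < Suc j"
      show "step n (C' t) (C' (Suc t))"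
      proof (cases "t = j")
        case True then show ?thesis using bc(3) by (simp add: C'_def)
      next
        case False then show ?thesis using SC(4) t by (simp add: C'_def)
      qed
    qed
    ultimately show ?case by blast
  qed
  obtain S C where SC: "card S = n" "J n G r l S (C (n-1))" "C 0 = init l"
    "\<forall>t<n-1. step n (C t) (C (Suc t))" using build[of "n-1"] n2 by auto
  define c where "c = C (n-1)"
  have Sn: "S \<subseteq> {..<n}" using SC(2) unfolding J_def by blast
  have Sall: "S = {..<n}" using card_subset_eq[OF _ Sn] SC(1) by simp
  have Jc: "J n G r l {..<n} c" using SC(2) Sall by (simp add: c_def)
  have nF: "fst c j \<noteq> F" if "j < n" for j
  proof -
    have "?s j < n" using sg_lt[OF rn ln that] .
    then obtain m where "fst c (?s (?s j)) = stt r (?s j) m" using Jc unfolding J_def by blast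
    then show ?thesis using stt_nF by simp
  qed
  have ed: "snd c = {{?s a, ?s b} | a b. a \<in> {..<n} \<and> b \<in> {..<n} \<and> {a, b} \<in> G}"
    using Jc unfolding J_def by blast
  have noop: "interact u v c = c" if uv: "u < n" "v < n" for u v
  proof -
    from interact_cases[of u v c] show ?thesis
    proof
      assume "\<exists>p x. (p = u \<and> x = v \<or> p = v \<and> x = u) \<and> fst c x = F \<and>
        0 < slots (fst c p) \<and> {p,x} \<notin> snd c \<and> interact u v c = attach p x c"
      then obtain x where "x < n" "fst c x = F" using uv by auto
      then show ?thesis using nF by blast
    qed simp
  qed
  define C'' where "C'' t = (if t \<le> n - 1 then C t else c)" for t
  have ex: "execution n l C''"
    unfolding execution_def
  proof (intro conjI allI)
    show "C'' 0 = init l" using SC(3) by (simp add: C''_def)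
  next
    fix t
    show "step n (C'' t) (C'' (Suc t))"
    proof (cases "t < n - 1")
      case True then show ?thesis using SC(4) by (simp add: C''_def)
    next
      case False
      then have "C'' t = c" "C'' (Suc t) = c" by (auto simp: C''_def c_def)
      moreover have "step n c c"
        unfolding step_def using noop[of 0 1] n2
        by (intro exI[of _ 0] exI[of _ 1]) simp
      ultimately show ?thesis by simp
    qed
  qed
  have iso: "iso n (snd c) G"
    unfolding iso_def
  proof (rule exI[of _ ?s], intro conjI allI impI)
    show "bij_betw ?s {0..<n} {0..<n}"
      by (rule bij_betw_byWitness[of _ ?s]) (auto simp: sg_lt[OF rn ln])
  next
    fix u v assume u: "u < n" and v: "v < n"
    show "adj (snd c) u v \<longleftrightarrow> adj G (?s u) (?s v)"
    proof
      assume "adj (snd c) u v"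
      then obtain a b where ab: "u \<noteq> v" "{u, v} = {?s a, ?s b}" "{a, b} \<in> G"
        unfolding adj_def ed by blast
      then have "u = ?s a \<and> v = ?s b \<or> u = ?s b \<and> v = ?s a" by (auto simp: doubleton_eq_iff)
      then have "{?s u, ?s v} \<in> G" using ab(3) by (auto simp: insert_commute)
      moreover have "?s u \<noteq> ?s v" using ab(1) by (simp add: sg_inj)
      ultimately show "adj G (?s u) (?s v)" by (simp add: adj_def)
    next
      assume A: "adj G (?s u) (?s v)"
      then have "{?s u, ?s v} \<in> G" "u \<noteq> v" by (auto simp: adj_def)
      moreover have "?s u < n" "?s v < n" using u v sg_lt[OF rn ln] by auto
      ultimately have "{?s (?s u), ?s (?s v)} \<in> snd c" unfolding ed by blast
      then show "adj (snd c) u v" using \<open>u \<noteq> v\<close> by (simp add: adj_def)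
    qed
  qed
  have "stabilises n C'' G"
    unfolding stabilises_def
  proof (rule exI[of _ "n - 1"], intro allI impI)
    fix t assume "n - 1 \<le> t"
    then have "C'' t = c" by (auto simp: C''_def c_def)
    then show "iso n (snd (C'' t)) G" using iso by simp
  qed
  then show ?thesis using ex by blast
qed

lemma part1: "2 \<le> n \<Longrightarrow> l < n \<Longrightarrow> stably_constructs n l (treeT n)"
  unfolding stably_constructs_def using fair_stab constructible by blast

definition ia :: "nat \<times> nat \<Rightarrow> config \<Rightarrow> config" where
  "ia x c = interact (fst x) (snd x) c"

definition run :: "config \<Rightarrow> (nat \<times> nat) list \<Rightarrow> config" where
  "run c xs = fold (\<lambda>(u, v) c. interact u v c) xs c"

lemma config_at_run: "config_at l \<omega> t = run (init l) (stake t \<omega>)"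
  by (simp add: config_at_def run_def)

lemma run_Nil[simp]: "run c [] = c" by (simp add: run_def)
lemma run_Cons: "run c (x # xs) = run (ia x c) xs"
  by (cases x) (simp add: run_def ia_def)
lemma run_append: "run c (xs @ ys) = run (run c xs) ys"
  by (simp add: run_def)

lemma ia_step:
  assumes I: "Inv n l c" and x: "x \<in> upairs n"
  shows "ia x c = c \<or> (Inv n l (ia x c) \<and> kk n (ia x c) = kk n c + 1)"
proof -
  obtain u v where uv: "x = (u, v)" "u < v" "v < n" using x by (auto simp: upairs_def)
  have "step n c (ia x c)" unfolding step_def ia_def using uv
    by (intro exI[of _ u] exI[of _ v]) simp
  then show ?thesis using step_cases[OF I] by blast
qed

lemma ia_Inv: "Inv n l c \<Longrightarrow> x \<in> upairs n \<Longrightarrow> Inv n l (ia x c)"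
  using ia_step by metis

lemma run_Inv: "set xs \<subseteq> upairs n \<Longrightarrow> Inv n l c \<Longrightarrow> Inv n l (run c xs)"
proof (induction xs arbitrary: c)
  case Nil then show ?case by simp
next
  case (Cons x xs)
  then have "Inv n l (ia x c)" using ia_Inv by simp
  then show ?case using Cons by (simp add: run_Cons)
qed

lemma run_done: "set xs \<subseteq> upairs n \<Longrightarrow> Inv n l c \<Longrightarrow> kk n c = n \<Longrightarrow> run c xs = c"
proof (induction xs arbitrary: c)
  case Nil then show ?case by simp
next
  case (Cons x xs)
  obtain u v where uv: "x = (u, v)" "u < v" "v < n" using Cons.prems(1) by (auto simp: upairs_def)
  have "ia x c = c" using done_noop[OF Cons.prems(2,3)] uv by (simp add: ia_def)
  then show ?case using Cons by (simp add: run_Cons)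
qed

lemma upairs_Suc: "upairs (Suc n) = upairs n \<union> (\<lambda>u. (u, n)) ` {..<n}"
  by (auto simp: upairs_def)

lemma card_upairs: "2 * card (upairs n) = n * (n - 1)"
proof (induction n)
  case 0 then show ?case by (simp add: upairs_def)
next
  case (Suc n)
  have fin: "finite (upairs n)" by (rule finite_subset[of _ "{..<n} \<times> {..<n}"]) (auto simp: upairs_def)
  have disj: "upairs n \<inter> (\<lambda>u. (u, n)) ` {..<n} = {}" by (auto simp: upairs_def)
  have ci: "card ((\<lambda>u. (u, n)) ` {..<n}) = n" by (subst card_image) (auto simp: inj_on_def)
  have "card (upairs (Suc n)) = card (upairs n) + n"
    unfolding upairs_Suc using fin disj ci by (simp add: card_Un_disjoint)
  then show ?case using Suc.IH by (cases n) (auto simp: algebra_simps)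
qed

lemma finite_upairs: "finite (upairs n)"
  by (rule finite_subset[of _ "{..<n} \<times> {..<n}"]) (auto simp: upairs_def)

lemma upairs_ne: "2 \<le> n \<Longrightarrow> upairs n \<noteq> {}"
proof -
  assume "2 \<le> n"
  then have "(0, 1) \<in> upairs n" by (simp add: upairs_def)
  then show ?thesis by blast
qed

lemma Gd_bound:
  assumes I: "Inv n l c" and k: "kk n c < n"
  shows "(kk n c + 1) * (n - kk n c) \<le> 2 * card {x \<in> upairs n. kk n (ia x c) = kk n c + 1}"
proof -
  define A where "A = {p. p < n \<and> 0 < slots (fst c p)}"
  define Fs where "Fs = {x. x < n \<and> fst c x = F}"
  define Gd where "Gd = {x \<in> upairs n. kk n (ia x c) = kk n c + 1}"
  have finA: "finite A" by (simp add: A_def)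
  have AF: "A \<inter> Fs = {}" by (auto simp: A_def Fs_def)
  have cFs: "card Fs = n - kk n c"
  proof -
    have "{..<n} = Fs \<union> {i. i < n \<and> fst c i \<noteq> F}" "Fs \<inter> {i. i < n \<and> fst c i \<noteq> F} = {}"
      by (auto simp: Fs_def)
    then have "n = card Fs + kk n c" unfolding kk_def
      by (metis card_Un_disjoint card_lessThan finite_Un finite_lessThan)
    then show ?thesis by simp
  qed
  have cA: "kk n c + 1 \<le> 2 * card A"
  proof -
    have s: "(\<Sum>i<n. slots (fst c i)) = kk n c + 1" using I unfolding Inv_def by blast
    have "(\<Sum>i<n. slots (fst c i)) = (\<Sum>i\<in>A. slots (fst c i))"
      by (rule sum.mono_neutral_right) (auto simp: A_def)
    also have "\<dots> \<le> (\<Sum>i\<in>A. 2)" by (rule sum_mono) (simp add: slots_le2)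
    also have "\<dots> = 2 * card A" by simp
    finally show ?thesis using s by simp
  qed
  define h where "h = (\<lambda>(p::nat, x::nat). (min p x, max p x))"
  have edges: "\<forall>e\<in>snd c. \<forall>i\<in>e. fst c i \<noteq> F" using I unfolding Inv_def by blast
  have hG: "h ` (A \<times> Fs) \<subseteq> Gd"
  proof
    fix y assume "y \<in> h ` (A \<times> Fs)"
    then obtain p x where px: "p \<in> A" "x \<in> Fs" "y = h (p, x)" by blast
    have pn: "p < n" "0 < slots (fst c p)" using px by (auto simp: A_def)
    have xn: "x < n" "fst c x = F" using px by (auto simp: Fs_def)
    have pxne: "p \<noteq> x" using pn xn by auto
    have ne: "{p, x} \<notin> snd c" using edges xn by auto
    have "ia y c = attach p x c"
    proof (cases "p < x")
      case True
      then have "y = (p, x)" using px by (simp add: h_def)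
      then show ?thesis using interact_attach(1)[OF xn(2) pn(2) ne] by (simp add: ia_def)
    next
      case False
      then have "y = (x, p)" using px pxne by (simp add: h_def)
      then show ?thesis using interact_attach(2)[OF xn(2) pn(2) ne] by (simp add: ia_def)
    qed
    then have "kk n (ia y c) = kk n c + 1" using Inv_attach[OF I pn(1) xn(1) xn(2) pn(2) ne] by simp
    moreover have "y \<in> upairs n" using px pn xn pxne by (auto simp: h_def upairs_def)
    ultimately show "y \<in> Gd" by (simp add: Gd_def)
  qed
  have hinj: "inj_on h (A \<times> Fs)"
  proof (rule inj_onI)
    fix a b assume a: "a \<in> A \<times> Fs" and b: "b \<in> A \<times> Fs" and e: "h a = h b"
    obtain p x where ax: "a = (p, x)" "p \<in> A" "x \<in> Fs" using a by blast
    obtain p' x' where bx: "b = (p', x')" "p' \<in> A" "x' \<in> Fs" using b by blast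
    have "p \<noteq> x'" "p' \<noteq> x" using ax bx AF by auto
    then show "a = b" using e ax bx by (auto simp: h_def min_def max_def split: if_splits)
  qed
  have finGd: "finite Gd" using finite_upairs by (simp add: Gd_def)
  have "card (A \<times> Fs) \<le> card Gd" using card_inj_on_le[OF hinj hG finGd] .
  then have "card A * (n - kk n c) \<le> card Gd" using cFs by (simp add: card_cartesian_product)
  then have "2 * card A * (n - kk n c) \<le> 2 * card Gd" by simp
  moreover have "(kk n c + 1) * (n - kk n c) \<le> 2 * card A * (n - kk n c)"
    using cA by (rule mult_right_mono) simp
  ultimately show ?thesis unfolding Gd_def by linarith
qed

lemma aux_cancel: "(M::real) \<noteq> 0 \<Longrightarrow> K \<noteq> 0 \<Longrightarrow> N/(K*M) * (M*(N-K)/2) = N*(N-K)/(2*K)"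
  by (simp add: field_simps)
lemma real_step:
  fixes U g K N :: real
  assumes "2*U = N*(N-1)" "(K+1)*(N-K) \<le> 2*g" "1 \<le> K" "K < N"
  shows "U*((N-K)/K) - N/(K*(K+1)) * g \<le> U*(1-1/N)*((N-K)/K)"
proof -
  have N0: "N > 0" "K > 0" using assms by auto
  have "U*((N-K)/K) - U*(1-1/N)*((N-K)/K) = U*(N-K)/(K*N)" using N0 by (simp add: field_simps)
  also have "\<dots> = (N-1)*(N-K)/(2*K)"
  proof -
    have U: "U = N*(N-1)/2" using assms(1) by simp
    show ?thesis using N0 unfolding U by (simp add: field_simps)
  qed
  also have "\<dots> \<le> N*(N-K)/(2*K)" using N0 assms by (intro divide_right_mono mult_right_mono) auto
  also have "\<dots> = N/(K*(K+1)) * ((K+1)*(N-K)/2)" by (rule aux_cancel[symmetric]) (use N0 in auto)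
  also have "\<dots> \<le> N/(K*(K+1)) * g" using N0 assms(2) by (intro mult_left_mono) auto
  finally show ?thesis by simp
qed

lemma aux2: "(M::real) \<noteq> 0 \<Longrightarrow> K \<noteq> 0 \<Longrightarrow> M - K = 1 \<Longrightarrow> (N - M)/M = (N-K)/K - N/(K*M)"
proof -
  assume a: "M \<noteq> 0" "K \<noteq> 0" "M - K = 1"
  have "(N-K)/K - N/(K*M) = ((N-K)*M - N)/(K*M)" using a(1,2) by (simp add: field_simps)
  also have "(N-K)*M - N = (N - M) * K" using a(3) by algebra
  also have "(N - M) * K / (K * M) = (N - M)/M" using a(1,2) by simp
  finally show ?thesis by simp
qed

definition psi :: "nat \<Rightarrow> nat \<Rightarrow> real" where
  "psi n k = (real n - real k) / real k"

lemma kk_pos: "Inv n l c \<Longrightarrow> 1 \<le> kk n c"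
proof -
  assume I: "Inv n l c"
  have "l \<in> {i. i < n \<and> fst c i \<noteq> F}" using I unfolding Inv_def by blast
  then have "card {l} \<le> card {i. i < n \<and> fst c i \<noteq> F}" by (intro card_mono) auto
  then show ?thesis by (simp add: kk_def)
qed

lemma exp_step:
  assumes I: "Inv n l c" and n2: "2 \<le> n"
  shows "(\<Sum>x\<in>upairs n. psi n (kk n (ia x c))) \<le> real (card (upairs n)) * (1 - 1/real n) * psi n (kk n c)"
proof -
  define k where "k = kk n c"
  have k1: "1 \<le> k" using kk_pos[OF I] by (simp add: k_def)
  have kn: "k \<le> n" using kk_le by (simp add: k_def)
  have cx: "kk n (ia x c) = k \<or> kk n (ia x c) = k + 1" if "x \<in> upairs n" for x
    using ia_step[OF I that] by (auto simp: k_def)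
  show ?thesis
  proof (cases "k = n")
    case True
    have "kk n (ia x c) = n" if "x \<in> upairs n" for x
      using cx[OF that] kk_le[of n "ia x c"] True by auto
    then have "(\<Sum>x\<in>upairs n. psi n (kk n (ia x c))) = 0" by (simp add: psi_def)
    moreover have "psi n (kk n c) = 0" using True by (simp add: psi_def k_def)
    ultimately show ?thesis by simp
  next
    case False
    then have kn': "k < n" using kn by simp
    define Gd where "Gd = {x \<in> upairs n. kk n (ia x c) = k + 1}"
    have finU: "finite (upairs n)" by (rule finite_upairs)
    have GdU: "Gd \<subseteq> upairs n" by (auto simp: Gd_def)
    have s1: "(\<Sum>x\<in>Gd. psi n (kk n (ia x c))) = real (card Gd) * psi n (k+1)"
      by (simp add: Gd_def)
    have s2: "(\<Sum>x\<in>upairs n - Gd. psi n (kk n (ia x c))) = real (card (upairs n - Gd)) * psi n k"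
    proof -
      have "\<forall>x\<in>upairs n - Gd. kk n (ia x c) = k" using cx by (auto simp: Gd_def)
      then show ?thesis by simp
    qed
    have cdiff: "real (card (upairs n - Gd)) = real (card (upairs n)) - real (card Gd)"
      using card_Diff_subset[OF finite_subset[OF GdU finU] GdU] card_mono[OF finU GdU] by simp
    have sum: "(\<Sum>x\<in>upairs n. psi n (kk n (ia x c))) =
        real (card Gd) * psi n (k+1) + (real (card (upairs n)) - real (card Gd)) * psi n k"
      using sum.subset_diff[OF GdU finU, of "\<lambda>x. psi n (kk n (ia x c))"] s1 s2 cdiff by simp
    define N where "N = real n"
    define K where "K = real k"
    have K0: "K > 0" "K + 1 \<noteq> 0" using k1 by (auto simp: K_def)
    have pk: "psi n k = (N - K) / K" by (simp add: psi_def N_def K_def)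
    have pk1: "psi n (k+1) = (N - K) / K - N / (K * (K + 1))"
    proof -
      have "psi n (k+1) = (N - (K+1)) / (K+1)" by (simp add: psi_def N_def K_def ac_simps)
      also have "\<dots> = (N - K) / K - N / (K * (K + 1))" by (rule aux2) (use K0 in auto)
      finally show ?thesis .
    qed
    have U2: "2 * real (card (upairs n)) = N * (N - 1)"
    proof -
      have "real (2 * card (upairs n)) = real (n * (n - 1))" using card_upairs by metis
      then show ?thesis using n2 by (simp add: N_def of_nat_diff)
    qed
    have g2: "(K + 1) * (N - K) \<le> 2 * real (card Gd)"
    proof -
      have "(kk n c + 1) * (n - kk n c) \<le> 2 * card Gd"
        using Gd_bound[OF I] kn' unfolding Gd_def k_def by simp
      then have "real ((k + 1) * (n - k)) \<le> real (2 * card Gd)" unfolding k_def by linarith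
      moreover have "real ((k + 1) * (n - k)) = (real k + 1) * (real n - real k)"
        using kn by (simp only: of_nat_mult of_nat_add of_nat_1 of_nat_diff)
      ultimately have "(real k + 1) * (real n - real k) \<le> 2 * real (card Gd)" by simp
      then show ?thesis by (simp add: K_def N_def)
    qed
    have "real (card Gd) * psi n (k+1) + (real (card (upairs n)) - real (card Gd)) * psi n k =
        real (card (upairs n)) * ((N - K) / K) - N / (K * (K + 1)) * real (card Gd)"
      unfolding pk pk1 by (simp add: algebra_simps)
    also have "\<dots> \<le> real (card (upairs n)) * (1 - 1/N) * ((N - K) / K)"
      by (rule real_step[OF U2 g2]) (use k1 kn' in \<open>auto simp: K_def N_def\<close>)
    finally show ?thesis using sum pk by (simp add: N_def k_def)
  qed
qed

lemma stake_meas: "stake N \<in> sched n \<rightarrow>\<^sub>M count_space UNIV"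
  unfolding sched_def
  by (subst measurable_cong_sets[OF sets_stream_space_cong[OF sets_measure_pmf_count_space] refl])
     (rule measurable_stake)

lemma stake_fun_meas: "space M = UNIV \<Longrightarrow> (\<lambda>\<omega>. f (stake N \<omega>)) \<in> sched n \<rightarrow>\<^sub>M M"
  by (rule measurable_compose[OF stake_meas]) (simp add: measurable_count_space_eq1)

lemma stake_pred_sets: "{\<omega> \<in> space (sched n). P (stake N \<omega>)} \<in> sets (sched n)"
proof -
  have "(\<lambda>\<omega>. P (stake N \<omega>)) -` {True} \<inter> space (sched n) \<in> sets (sched n)"
    by (rule measurable_sets[OF stake_fun_meas[where M="count_space UNIV"]]) simp_all
  moreover have "(\<lambda>\<omega>. P (stake N \<omega>)) -` {True} \<inter> space (sched n) = {\<omega> \<in> space (sched n). P (stake N \<omega>)}"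
    by auto
  ultimately show ?thesis by simp
qed

lemma space_sched: "space (sched n) = UNIV"
  by (simp add: sched_def space_stream_space)

definition bad :: "nat \<Rightarrow> nat \<Rightarrow> config \<Rightarrow> (nat \<times> nat) stream \<Rightarrow> ennreal" where
  "bad n N c \<omega> = (if set (stake N \<omega>) \<subseteq> upairs n \<and> kk n (run c (stake N \<omega>)) < n then 1 else 0)"

lemma bad_meas: "bad n N c \<in> borel_measurable (sched n)"
proof -
  have "(\<lambda>\<omega>. (\<lambda>xs. if set xs \<subseteq> upairs n \<and> kk n (run c xs) < n then 1 else 0 :: ennreal) (stake N \<omega>)) \<in> borel_measurable (sched n)"
    by (rule stake_fun_meas) simp
  then show ?thesis unfolding bad_def[abs_def] by simp
qed

lemma bad_Suc: "bad n (Suc N) c (x ## X) = (if x \<in> upairs n then bad n N (ia x c) X else 0)"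
  by (simp add: bad_def run_Cons)

lemma bad_0: "bad n 0 c \<omega> = (if kk n c < n then 1 else 0)"
  by (simp add: bad_def)

lemma psi_nonneg: "k \<le> n \<Longrightarrow> 0 \<le> psi n k"
  by (simp add: psi_def)

lemma base_real: "1 \<le> k \<Longrightarrow> k < n \<Longrightarrow> 1 \<le> (real n - 1) * psi n k"
proof -
  assume k: "1 \<le> k" "k < n"
  have "real k \<le> real n - 1" using k by linarith
  moreover have "1 \<le> real n - real k" using k by linarith
  ultimately have "real k * 1 \<le> (real n - 1) * (real n - real k)"
    by (intro mult_mono) auto
  then show ?thesis using k by (simp add: psi_def field_simps)
qed

lemma bad_bound:
  assumes n2: "2 \<le> n"
  shows "Inv n l c \<Longrightarrow> (\<integral>\<^sup>+\<omega>. bad n N c \<omega> \<partial>sched n) \<le>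
           ennreal ((1 - 1/real n)^N * (real n - 1) * psi n (kk n c))"
proof (induction N arbitrary: c)
  case 0
  interpret P: prob_space "measure_pmf (pmf_of_set (upairs n))" by (rule prob_space_measure_pmf)
  interpret S: prob_space "sched n" unfolding sched_def
    by (rule prob_space.prob_space_stream_space[OF prob_space_measure_pmf])
  have k1: "1 \<le> kk n c" using kk_pos[OF "0.prems"] .
  have "(\<integral>\<^sup>+\<omega>. bad n 0 c \<omega> \<partial>sched n) = (if kk n c < n then 1 else 0)"
    by (simp add: bad_0 S.emeasure_space_1)
  also have "\<dots> \<le> ennreal ((real n - 1) * psi n (kk n c))"
    using base_real[OF k1] by (auto simp: ennreal_le_iff[symmetric] simp del: ennreal_le_iff)
  finally show ?case by simp
next
  case (Suc N)
  define p where "p = pmf_of_set (upairs n)"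
  define B where "B = (1 - 1/real n)^N * (real n - 1)"
  interpret P: prob_space "measure_pmf p" by (rule prob_space_measure_pmf)
  have M: "sched n = stream_space (measure_pmf p)" by (simp add: sched_def p_def)
  have finU: "finite (upairs n)" by (rule finite_upairs)
  have neU: "upairs n \<noteq> {}" using upairs_ne[OF n2] .
  have B0: "0 \<le> B" using n2 by (simp add: B_def)
  have kn: "kk n c \<le> n" by (rule kk_le)
  have "(\<integral>\<^sup>+\<omega>. bad n (Suc N) c \<omega> \<partial>sched n) =
        (\<integral>\<^sup>+x. (\<integral>\<^sup>+X. bad n (Suc N) c (x ## X) \<partial>sched n) \<partial>measure_pmf p)"
    unfolding M by (rule prob_space.nn_integral_stream_space[OF prob_space_measure_pmf]) (use bad_meas[of n "Suc N" c] M in simp)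
  also have "\<dots> = (\<integral>\<^sup>+x. (if x \<in> upairs n then (\<integral>\<^sup>+X. bad n N (ia x c) X \<partial>sched n) else 0) \<partial>measure_pmf p)"
    by (rule nn_integral_cong) (simp add: bad_Suc)
  also have "\<dots> \<le> (\<integral>\<^sup>+x. (if x \<in> upairs n then ennreal (B * psi n (kk n (ia x c))) else 0) \<partial>measure_pmf p)"
  proof (rule nn_integral_mono)
    fix x
    show "(if x \<in> upairs n then (\<integral>\<^sup>+X. bad n N (ia x c) X \<partial>sched n) else 0) \<le>
          (if x \<in> upairs n then ennreal (B * psi n (kk n (ia x c))) else 0)"
    proof (cases "x \<in> upairs n")
      case True
      then have "Inv n l (ia x c)" using ia_Inv Suc.prems by blast
      then show ?thesis using Suc.IH True by (simp add: B_def)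
    qed simp
  qed
  also have "\<dots> = (\<Sum>x\<in>upairs n. (if x \<in> upairs n then ennreal (B * psi n (kk n (ia x c))) else 0)) / of_nat (card (upairs n))"
    unfolding p_def by (rule nn_integral_pmf_of_set[OF neU finU])
  also have "\<dots> = ennreal (B * (\<Sum>x\<in>upairs n. psi n (kk n (ia x c)))) / ennreal (real (card (upairs n)))"
  proof -
    have "(\<Sum>x\<in>upairs n. (if x \<in> upairs n then ennreal (B * psi n (kk n (ia x c))) else 0)) =
          (\<Sum>x\<in>upairs n. ennreal (B * psi n (kk n (ia x c))))" by simp
    also have "\<dots> = ennreal (\<Sum>x\<in>upairs n. B * psi n (kk n (ia x c)))"
      by (rule sum_ennreal) (use B0 kk_le psi_nonneg in auto)
    finally show ?thesis by (simp add: sum_distrib_left ennreal_of_nat_eq_real_of_nat)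
  qed
  also have "\<dots> = ennreal (B * (\<Sum>x\<in>upairs n. psi n (kk n (ia x c))) / real (card (upairs n)))"
  proof (rule divide_ennreal)
    show "0 \<le> B * (\<Sum>x\<in>upairs n. psi n (kk n (ia x c)))"
      using B0 kk_le psi_nonneg by (intro mult_nonneg_nonneg sum_nonneg) auto
    show "0 < real (card (upairs n))" using finU neU by (simp add: card_gt_0_iff)
  qed
  also have "\<dots> \<le> ennreal ((1 - 1/real n)^Suc N * (real n - 1) * psi n (kk n c))"
  proof (rule ennreal_leI)
    have cp: "0 < real (card (upairs n))" using finU neU by (simp add: card_gt_0_iff)
    have "B * (\<Sum>x\<in>upairs n. psi n (kk n (ia x c))) \<le> B * (real (card (upairs n)) * (1 - 1/real n) * psi n (kk n c))"
      by (rule mult_left_mono[OF exp_step[OF Suc.prems n2] B0])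
    then have "B * (\<Sum>x\<in>upairs n. psi n (kk n (ia x c))) / real (card (upairs n)) \<le>
        B * (real (card (upairs n)) * (1 - 1/real n) * psi n (kk n c)) / real (card (upairs n))"
      using cp by (intro divide_right_mono) auto
    also have "\<dots> = (1 - 1/real n)^Suc N * (real n - 1) * psi n (kk n c)"
      using cp by (simp add: B_def field_simps)
    finally show "B * (\<Sum>x\<in>upairs n. psi n (kk n (ia x c))) / real (card (upairs n)) \<le>
        (1 - 1/real n)^Suc N * (real n - 1) * psi n (kk n c)" .
  qed
  finally show ?case .
qed

lemma final_real:
  fixes a :: real
  assumes n2: "2 \<le> n" and a: "a > 0" and hN: "(a+2) * real n * ln (real n) \<le> real N"
  shows "(1 - 1/real n)^N * (real n - 1) * (real n - 1) \<le> real n powr (-a)"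
proof -
  have n0: "real n > 0" using n2 by simp
  have "1 - 1/real n \<le> exp (-1/real n)" using exp_ge_add_one_self[of "-1/real n"] by simp
  moreover have "0 \<le> 1 - 1/real n" using n2 by (simp add: field_simps)
  ultimately have "(1 - 1/real n)^N \<le> exp (-1/real n)^N" by (intro power_mono)
  also have "\<dots> = exp (real N * (-1/real n))" by (rule exp_of_nat_mult[symmetric])
  also have "\<dots> \<le> exp (-(a+2) * ln (real n))"
  proof -
    have "(a+2) * ln (real n) \<le> real N / real n" using hN n0 by (simp add: field_simps)
    then have "real N * (-1/real n) \<le> -(a+2) * ln (real n)" by (simp add: field_simps)
    then show ?thesis by simp
  qed
  also have "\<dots> = real n powr (-(a+2))" using n0 by (simp add: powr_def)
  finally have e: "(1 - 1/real n)^N \<le> real n powr (-(a+2))" .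
  have q: "(real n - 1) * (real n - 1) \<le> real n powr 2"
  proof -
    have "(real n - 1) * (real n - 1) \<le> real n * real n" using n2 by (intro mult_mono) auto
    also have "\<dots> = real n powr 2" using n0 by (simp add: powr_numeral power2_eq_square)
    finally show ?thesis .
  qed
  have "(1 - 1/real n)^N * (real n - 1) * (real n - 1) = (1 - 1/real n)^N * ((real n - 1) * (real n - 1))"
    by simp
  also have "\<dots> \<le> real n powr (-(a+2)) * real n powr 2"
    using e q n2 by (intro mult_mono) auto
  also have "\<dots> = real n powr (-(a+2) + 2)" by (rule powr_add[symmetric])
  also have "\<dots> = real n powr (-a)" by simp
  finally show ?thesis .
qed

lemma finite_pairs: "finite (pairs n)"
proof -
  have "pairs n \<subseteq> (\<lambda>(u, v). {u, v}) ` ({..<n} \<times> {..<n})" by (auto simp: pairs_def)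
  then show ?thesis by (rule finite_subset) simp
qed

lemma kk_init: "l < n \<Longrightarrow> kk n (init l) = 1"
proof -
  assume l: "l < n"
  have "{i. i < n \<and> fst (init l) i \<noteq> F} = {l}" using l by (auto simp: init_def)
  then show ?thesis by (simp add: kk_def)
qed

lemma stake_in: "(\<forall>i. s !! i \<in> A) \<Longrightarrow> set (stake m s) \<subseteq> A"
  by (auto simp: in_set_conv_nth)

lemma part2:
  fixes a :: real
  assumes a: "a > 0" and n2: "2 \<le> n" and ln: "l < n"
  shows "measure (sched n)
           {\<omega> \<in> space (sched n). \<exists>G. treeT n G \<and>
               (\<forall>t::nat. real t \<ge> (a + 2) * real n * ln (real n) \<longrightarrow>
                  iso n (snd (config_at l \<omega> t)) G)}
         \<ge> 1 - real n powr (- a)"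
proof -
  define x where "x = (a + 2) * real n * ln (real n)"
  define N where "N = nat \<lceil>x\<rceil>"
  define U where "U = upairs n"
  define p where "p = pmf_of_set U"
  define S where "S = {\<omega> \<in> space (sched n). \<exists>G. treeT n G \<and>
               (\<forall>t::nat. real t \<ge> x \<longrightarrow> iso n (snd (config_at l \<omega> t)) G)}"
  have M: "sched n = stream_space (measure_pmf p)" by (simp add: sched_def p_def U_def)
  interpret SP: prob_space "sched n" unfolding M
    by (rule prob_space.prob_space_stream_space[OF prob_space_measure_pmf])
  have finU: "finite U" unfolding U_def by (rule finite_upairs)
  have neU: "U \<noteq> {}" unfolding U_def using upairs_ne[OF n2] .
  have xN: "x \<le> real N" unfolding N_def by (rule real_nat_ceiling_ge)
  have tN: "N \<le> t" if "x \<le> real t" for t using that unfolding N_def by (simp add: nat_ceiling_le_eq)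
  define GS where "GS = {G. G \<subseteq> pairs n \<and> treeT n G}"
  define T where "T = {t::nat. x \<le> real t}"
  have S_eq: "S = (\<Union>G\<in>GS. \<Inter>t\<in>T. {\<omega> \<in> space (sched n). iso n (snd (run (init l) (stake t \<omega>))) G})"
    unfolding S_def GS_def T_def config_at_run using space_sched
    by (auto simp: treeT_def is_tree_def)
  have Ssets: "S \<in> sets (sched n)"
    unfolding S_eq
  proof (rule sets.countable_UN')
    have "GS \<subseteq> Pow (pairs n)" by (auto simp: GS_def)
    moreover have "finite (Pow (pairs n))" using finite_pairs by simp
    ultimately have "finite GS" by (rule finite_subset)
    then show "countable GS" by (rule countable_finite)
    show "(\<lambda>G. \<Inter>t\<in>T. {\<omega> \<in> space (sched n). iso n (snd (run (init l) (stake t \<omega>))) G}) ` GS \<subseteq> sets (sched n)"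
    proof
      fix Y assume "Y \<in> (\<lambda>G. \<Inter>t\<in>T. {\<omega> \<in> space (sched n). iso n (snd (run (init l) (stake t \<omega>))) G}) ` GS"
      then obtain G where Y: "Y = (\<Inter>t\<in>T. {\<omega> \<in> space (sched n). iso n (snd (run (init l) (stake t \<omega>))) G})" by blast
      have "N \<in> T" using xN by (simp add: T_def)
      then have "T \<noteq> {}" by blast
      then show "Y \<in> sets (sched n)" unfolding Y
        by (intro sets.countable_INT') (auto intro: stake_pred_sets)
    qed
  qed
  define Bs where "Bs = {\<omega> \<in> space (sched n). set (stake N \<omega>) \<subseteq> U \<and> kk n (run (init l) (stake N \<omega>)) < n}"
  have Bsets: "Bs \<in> sets (sched n)" unfolding Bs_def by (rule stake_pred_sets)
  have AEU: "AE \<omega> in sched n. \<forall>i. \<omega> !! i \<in> U"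
  proof -
    have "AE \<omega> in stream_space (measure_pmf p). stream_all (\<lambda>y. y \<in> U) \<omega>"
    proof (rule prob_space.AE_stream_all[OF prob_space_measure_pmf])
      show "Measurable.pred (measure_pmf p) (\<lambda>y. y \<in> U)" by (simp add: pred_def)
      show "AE y in measure_pmf p. y \<in> U"
        using AE_measure_pmf[of p] set_pmf_of_set[OF neU finU] by (simp add: p_def)
    qed
    then show ?thesis unfolding M stream_all_def .
  qed
  have AEmono: "AE \<omega> in sched n. \<omega> \<in> space (sched n) - S \<longrightarrow> \<omega> \<in> Bs"
    using AEU
  proof (rule eventually_mono)
    fix \<omega> assume all: "\<forall>i. \<omega> !! i \<in> U"
    show "\<omega> \<in> space (sched n) - S \<longrightarrow> \<omega> \<in> Bs"
    proof (intro impI, rule ccontr)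
      assume nS: "\<omega> \<in> space (sched n) - S" and nB: "\<omega> \<notin> Bs"
      define cN where "cN = run (init l) (stake N \<omega>)"
      have sN: "set (stake N \<omega>) \<subseteq> upairs n" using stake_in[OF all] by (simp add: U_def)
      have IN: "Inv n l cN" unfolding cN_def by (rule run_Inv[OF sN Inv_init[OF ln]])
      have kN: "kk n cN = n" using nB sN kk_le[of n cN] space_sched by (auto simp: Bs_def cN_def U_def)
      have later: "config_at l \<omega> t = cN" if "x \<le> real t" for t
      proof -
        have Nt: "N \<le> t" using tN[OF that] .
        have st: "stake t \<omega> = stake N \<omega> @ stake (t - N) (sdrop N \<omega>)"
          using Nt by (metis stake_add le_add_diff_inverse)
        have ss: "set (stake (t - N) (sdrop N \<omega>)) \<subseteq> upairs n"
          using all by (intro stake_in) (simp add: U_def sdrop_snth)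
        have "config_at l \<omega> t = run cN (stake (t - N) (sdrop N \<omega>))"
          unfolding config_at_run st run_append cN_def by (rule refl)
        also have "\<dots> = cN" by (rule run_done[OF ss IN kN])
        finally show ?thesis .
      qed
      have "\<omega> \<in> S" unfolding S_def using space_sched done_treeT[OF IN kN] later iso_refl by auto
      then show False using nS by blast
    qed
  qed
  have m1: "measure (sched n) (space (sched n) - S) \<le> measure (sched n) Bs"
    using SP.finite_measure_mono_AE[OF AEmono Bsets] .
  have ind: "indicator Bs \<omega> = bad n N (init l) \<omega>" for \<omega>
    by (simp add: Bs_def bad_def indicator_def space_sched U_def)
  have "ennreal (measure (sched n) Bs) = emeasure (sched n) Bs" using SP.emeasure_eq_measure by simp
  also have "\<dots> = (\<integral>\<^sup>+\<omega>. indicator Bs \<omega> \<partial>sched n)" using Bsets by simp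
  also have "\<dots> = (\<integral>\<^sup>+\<omega>. bad n N (init l) \<omega> \<partial>sched n)" using ind by simp
  also have "\<dots> \<le> ennreal ((1 - 1/real n)^N * (real n - 1) * psi n (kk n (init l)))"
    by (rule bad_bound[OF n2 Inv_init[OF ln]])
  also have "\<dots> = ennreal ((1 - 1/real n)^N * (real n - 1) * (real n - 1))"
    by (simp add: kk_init[OF ln] psi_def)
  finally have "measure (sched n) Bs \<le> (1 - 1/real n)^N * (real n - 1) * (real n - 1)"
    using n2 by (subst (asm) ennreal_le_iff) auto
  also have "\<dots> \<le> real n powr (-a)" by (rule final_real[OF n2 a]) (use xN x_def in simp)
  finally have mB: "measure (sched n) Bs \<le> real n powr (-a)" .
  have "measure (sched n) (space (sched n) - S) = 1 - measure (sched n) S"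
    using SP.prob_compl[OF Ssets] .
  then have "1 - real n powr (-a) \<le> measure (sched n) S" using m1 mB by linarith
  then show ?thesis unfolding S_def x_def .
qed

theorem theorem1:
  shows "(\<forall>n l. 2 \<le> n \<and> l < n \<longrightarrow> stably_constructs n l (treeT n)) \<and>
         (\<forall>a::real. a > 0 \<longrightarrow> (\<exists>c::real. c > 0 \<and>
            (\<forall>n l. 2 \<le> n \<and> l < n \<longrightarrow>
               measure (sched n)
                 {\<omega> \<in> space (sched n). \<exists>G. treeT n G \<and>
                     (\<forall>t::nat. real t \<ge> c * real n * ln (real n) \<longrightarrow>
                        iso n (snd (config_at l \<omega> t)) G)}
               \<ge> 1 - real n powr (- a))))"
proof (intro conjI allI impI)
  fix n l :: nat
  assume "2 \<le> n \<and> l < n"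
  then show "stably_constructs n l (treeT n)" using part1 by blast
next
  fix a :: real
  assume a: "a > 0"
  show "\<exists>c::real. c > 0 \<and>
            (\<forall>n l. 2 \<le> n \<and> l < n \<longrightarrow>
               measure (sched n)
                 {\<omega> \<in> space (sched n). \<exists>G. treeT n G \<and>
                     (\<forall>t::nat. real t \<ge> c * real n * ln (real n) \<longrightarrow>
                        iso n (snd (config_at l \<omega> t)) G)}
               \<ge> 1 - real n powr (- a))"
    using a part2[OF a] by (intro exI[of _ "a + 2"]) auto
qed

end
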